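(* Let $T$ be a triangulation of a finite planar point set $P$, let $l$ be a vertical separating line w.r.t. $P$, and let $e$ be an edge of $T$ that is good with respect to $l$. Then $e$ is an edge of the (unique) T-path $\pi_l(T)$.
   Context: A triangulation of $P$ is a crossing-free straight-line plane graph on $P$ whose outer face boundary is the boundary of $\mathrm{CH}(P)$ and all of whose bounded faces are empty triangles. A separating line w.r.t. $P$ is a line $l$ with $l\cap P=\emptyset$ and $l\cap\mathrm{CH}(P)\ne\emptyset$. The T-path $\pi_l(T)$ is the chain of edges of $T$ such that (1) every edge intersects $l$; (2) the first and last edges are the two edges of $\mathrm{CH}(P)$ intersected by $l$; (3) the region bounded by any two consecutive edges of the chain and $l$ contains no point of $P$ (it exists and is unique). An edge $e$ of $T$ not on $\mathrm{CH}(P)$ is flippable if the union of the two triangles of $T$ sharing $e$ is a convex quadrilateral; the two vertices of this quadrilateral not on $e$ are the opposite vertices of $e$. An edge $e$ of $T$ properly intersecting $l$ is good w.r.t. $l$ if it is flippable and its two opposite vertices lie on different sides of $l$. *)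

theory Defs
  imports "HOL-Analysis.Analysis"
begin

type_synonym pt = "real \<times> real"

definition general_position :: "pt set \<Rightarrow> bool" where
  "general_position P \<longleftrightarrow>
     (\<forall>a\<in>P. \<forall>b\<in>P. \<forall>c\<in>P. a \<noteq> b \<and> a \<noteq> c \<and> b \<noteq> c \<longrightarrow> \<not> collinear {a, b, c})"

definition triangulation :: "pt set \<Rightarrow> pt set set \<Rightarrow> bool" where
  "triangulation P T \<longleftrightarrow> finite P \<and>
     (\<forall>t\<in>T. t \<subseteq> P \<and> card t = 3 \<and> \<not> collinear t \<and> convex hull t \<inter> P = t) \<and>
     (\<forall>t\<in>T. \<forall>t'\<in>T. t \<noteq> t' \<longrightarrow> interior (convex hull t) \<inter> interior (convex hull t') = {}) \<and>
     \<Union> ((\<lambda>t. convex hull t) ` T) = convex hull P"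

definition edges_of :: "pt set set \<Rightarrow> pt set set" where
  "edges_of T = {{a, b} | a b. a \<noteq> b \<and> (\<exists>t\<in>T. a \<in> t \<and> b \<in> t)}"

definition hull_edge :: "pt set \<Rightarrow> pt set \<Rightarrow> bool" where
  "hull_edge P e \<longleftrightarrow> (\<exists>a b. e = {a, b} \<and> a \<noteq> b \<and> a \<in> P \<and> b \<in> P) \<and>
     convex hull e \<subseteq> frontier (convex hull P)"

definition vline :: "real \<Rightarrow> pt set" where
  "vline c = {x. fst x = c}"

definition separating_vline :: "pt set \<Rightarrow> real \<Rightarrow> bool" where
  "separating_vline P c \<longleftrightarrow> vline c \<inter> P = {} \<and> vline c \<inter> convex hull P \<noteq> {}"

definition crosses :: "real \<Rightarrow> pt set \<Rightarrow> bool" where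
  "crosses c e \<longleftrightarrow> (\<exists>a b. e = {a, b} \<and> fst a < c \<and> c < fst b)"

definition opposite_vertices :: "pt set set \<Rightarrow> pt set \<Rightarrow> pt \<Rightarrow> pt \<Rightarrow> bool" where
  "opposite_vertices T e p q \<longleftrightarrow> p \<noteq> q \<and> p \<notin> e \<and> q \<notin> e \<and>
     insert p e \<in> T \<and> insert q e \<in> T"

definition flippable :: "pt set \<Rightarrow> pt set set \<Rightarrow> pt set \<Rightarrow> bool" where
  "flippable P T e \<longleftrightarrow> e \<in> edges_of T \<and> \<not> hull_edge P e \<and>
     (\<exists>p q. opposite_vertices T e p q \<and>
        convex (convex hull (insert p e) \<union> convex hull (insert q e)))"

definition good_edge :: "pt set \<Rightarrow> pt set set \<Rightarrow> real \<Rightarrow> pt set \<Rightarrow> bool" where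
  "good_edge P T c e \<longleftrightarrow> crosses c e \<and> flippable P T e \<and>
     (\<forall>p q. opposite_vertices T e p q \<longrightarrow> (fst p < c) \<noteq> (fst q < c))"

definition region :: "real \<Rightarrow> pt set \<Rightarrow> pt set \<Rightarrow> pt set" where
  "region c e e' = convex hull ((e \<inter> e') \<union> ((convex hull e \<union> convex hull e') \<inter> vline c))"

definition is_T_path :: "pt set \<Rightarrow> pt set set \<Rightarrow> real \<Rightarrow> pt set list \<Rightarrow> bool" where
  "is_T_path P T c \<pi> \<longleftrightarrow> \<pi> \<noteq> [] \<and> distinct \<pi> \<and>
     (\<forall>e\<in>set \<pi>. e \<in> edges_of T \<and> crosses c e) \<and>
     hull_edge P (hd \<pi>) \<and> hull_edge P (last \<pi>) \<and> hd \<pi> \<noteq> last \<pi> \<and>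
     (\<forall>i. Suc i < length \<pi> \<longrightarrow>
        card (\<pi> ! i \<inter> \<pi> ! Suc i) = 1 \<and>
        region c (\<pi> ! i) (\<pi> ! Suc i) \<inter> P \<subseteq> \<pi> ! i \<inter> \<pi> ! Suc i)"

end

theory Submission
  imports Defs
begin

definition orient :: "pt \<Rightarrow> pt \<Rightarrow> pt \<Rightarrow> real" where
  "orient a b z = (fst b - fst a) * (snd z - snd a) - (snd b - snd a) * (fst z - fst a)"

definition lin :: "pt \<Rightarrow> pt \<Rightarrow> real \<Rightarrow> pt" where
  "lin a b s = (fst a + s * (fst b - fst a), snd a + s * (snd b - snd a))"

lemma lin_eq: "lin a b s = (1 - s) *\<^sub>R a + s *\<^sub>R b"
  by (simp add: lin_def prod_eq_iff algebra_simps)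

lemma orient_lin: "orient p q (lin a b s) = (1 - s) * orient p q a + s * orient p q b"
  by (simp add: orient_def lin_def algebra_simps)

lemma orient_cyc: "orient b c a = orient a b c" "orient a c b = - orient a b c"
  by (simp_all add: orient_def algebra_simps)

lemma orient_self: "orient a b a = 0" "orient a b b = 0"
  by (simp_all add: orient_def algebra_simps)

lemma lin_closed_segment: "0 \<le> s \<Longrightarrow> s \<le> 1 \<Longrightarrow> lin a b s \<in> closed_segment a b"
  unfolding in_segment lin_eq by blast

lemma lin_open_segment: "0 < s \<Longrightarrow> s < 1 \<Longrightarrow> a \<noteq> b \<Longrightarrow> lin a b s \<in> open_segment a b"
  unfolding in_segment lin_eq by blast

lemma lin_hull2: "0 \<le> s \<Longrightarrow> s \<le> 1 \<Longrightarrow> lin a b s \<in> convex hull {a, b}"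
  using lin_closed_segment segment_convex_hull by blast

lemma closed_segment_lin: "x \<in> closed_segment a b \<Longrightarrow> \<exists>s. 0 \<le> s \<and> s \<le> 1 \<and> x = lin a b s"
  unfolding in_segment lin_eq by blast

lemma collinear_of_orient:
  assumes "orient a b x = 0" "a \<noteq> b"
  shows "collinear {a, b, x}"
proof -
  have "\<exists>l. x = lin a b l"
  proof (cases "fst b = fst a")
    case True
    then have "snd b \<noteq> snd a" using assms(2) by (simp add: prod_eq_iff)
    define l where "l = (snd x - snd a) / (snd b - snd a)"
    have "fst x = fst a" using assms(1) True \<open>snd b \<noteq> snd a\<close> by (simp add: orient_def)
    then show ?thesis using True \<open>snd b \<noteq> snd a\<close>
      by (intro exI[of _ l]) (simp add: lin_def l_def prod_eq_iff)
  next
    case False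
    define l where "l = (fst x - fst a) / (fst b - fst a)"
    have "snd x = snd a + l * (snd b - snd a)"
      using assms(1) False unfolding orient_def l_def
      by (simp add: field_simps)
    then show ?thesis using False
      by (intro exI[of _ l]) (simp add: lin_def l_def prod_eq_iff)
  qed
  then obtain l where l: "x = lin a b l" by blast
  show ?thesis unfolding collinear_alt
    apply (rule exI[of _ a], rule exI[of _ "b - a"])
  proof (intro ballI)
    fix y assume "y \<in> {a, b, x}"
    then consider "y = a" | "y = b" | "y = x" by blast
    then show "\<exists>c. y = a + c *\<^sub>R (b - a)"
    proof cases
      case 1 then show ?thesis by (intro exI[of _ 0]) simp
    next
      case 2 then show ?thesis by (intro exI[of _ 1]) simp
    next
      case 3 then show ?thesis using l by (intro exI[of _ l]) (simp add: lin_eq algebra_simps)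
    qed
  qed
qed

lemma gp_orient:
  assumes "general_position P" "a \<in> P" "b \<in> P" "x \<in> P" "a \<noteq> b" "a \<noteq> x" "b \<noteq> x"
  shows "orient a b x \<noteq> 0"
  using assms collinear_of_orient unfolding general_position_def by blast

lemma gp_seg:
  assumes "general_position P" "a \<in> P" "b \<in> P" "x \<in> P" "a \<noteq> b" "x = lin a b s"
    "0 < s" "s < 1"
  shows False
proof -
  have "x \<noteq> a"
  proof
    assume "x = a"
    then have "s * (fst b - fst a) = 0" "s * (snd b - snd a) = 0" using assms(6) by (auto simp: lin_def prod_eq_iff)
    then have "fst b = fst a" "snd b = snd a" using assms(7) by auto
    then show False using assms(5) by (simp add: prod_eq_iff)
  qed
  moreover have "x \<noteq> b"
  proof
    assume "x = b"
    then have "(1 - s) * (fst b - fst a) = 0" "(1 - s) * (snd b - snd a) = 0" using assms(6)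
      by (auto simp: lin_def prod_eq_iff algebra_simps)
    then have "fst b = fst a" "snd b = snd a" using assms(8) by auto
    then show False using assms(5) by (simp add: prod_eq_iff)
  qed
  moreover have "orient a b x = 0" using assms(6) orient_lin[of a b a b s] by (simp add: orient_self)
  ultimately show False using gp_orient[OF assms(1,2,3,4,5)] by auto
qed


definition strict_in :: "pt \<Rightarrow> pt \<Rightarrow> pt \<Rightarrow> pt \<Rightarrow> bool" where
  "strict_in u w d z \<longleftrightarrow> orient u w d * orient u w z > 0 \<and> orient u w d * orient w d z > 0
     \<and> orient u w d * orient d u z > 0"

lemma hull3_orient:
  assumes "z \<in> convex hull {u, w, d}"
  shows "orient u w d * orient u w z \<ge> 0 \<and> orient u w d * orient w d z \<ge> 0
     \<and> orient u w d * orient d u z \<ge> 0"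
proof -
  obtain a b g where abg: "0 \<le> a" "0 \<le> b" "0 \<le> g" "a + b + g = 1"
    "z = a *\<^sub>R u + b *\<^sub>R w + g *\<^sub>R d"
    using assms unfolding convex_hull_3 by blast
  have a: "a = 1 - b - g" using abg by simp
  have zx: "fst z = a * fst u + b * fst w + g * fst d" and zy: "snd z = a * snd u + b * snd w + g * snd d"
    using abg(5) by simp_all
  have "orient u w z = g * orient u w d" "orient w d z = a * orient u w d"
       "orient d u z = b * orient u w d"
    unfolding orient_def zx zy a by (simp_all add: algebra_simps)
  then have "orient u w d * orient u w z = g * (orient u w d)\<^sup>2"
    "orient u w d * orient w d z = a * (orient u w d)\<^sup>2"
    "orient u w d * orient d u z = b * (orient u w d)\<^sup>2"
    by (simp_all add: power2_eq_square)
  then show ?thesis using abg(1-3) by simp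
qed

lemma div_nonneg_aux: "(D::real) \<noteq> 0 \<Longrightarrow> 0 \<le> D * x \<Longrightarrow> 0 \<le> x / D"
proof -
  assume "D \<noteq> 0" "0 \<le> D * x"
  moreover have "x / D = (D * x) / (D * D)" using \<open>D \<noteq> 0\<close> by simp
  moreover have "0 < D * D" using \<open>D \<noteq> 0\<close> by (simp add: not_square_less_zero order_le_neq_trans)
  ultimately show ?thesis by (metis divide_nonneg_pos)
qed

lemma orient_hull3:
  assumes "orient u w d \<noteq> 0" "orient u w d * orient u w z \<ge> 0" "orient u w d * orient w d z \<ge> 0"
     "orient u w d * orient d u z \<ge> 0"
  shows "z \<in> convex hull {u, w, d}"
proof -
  define D where "D = orient u w d"
  have D: "D \<noteq> 0" using assms D_def by simp
  define a where "a = orient w d z / D"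
  define b where "b = orient d u z / D"
  define g where "g = orient u w z / D"
  have nn: "0 \<le> a" "0 \<le> b" "0 \<le> g"
    using assms D unfolding a_def b_def g_def D_def by (auto intro: div_nonneg_aux)
  have id: "orient w d z + orient d u z + orient u w z = D"
    unfolding D_def orient_def by (simp add: algebra_simps)
  have s: "a + b + g = 1" using D id unfolding a_def b_def g_def
    by (simp add: add_divide_distrib[symmetric])
  have idx: "orient w d z * fst u + orient d u z * fst w + orient u w z * fst d = D * fst z"
    unfolding D_def orient_def by (simp add: algebra_simps)
  have idy: "orient w d z * snd u + orient d u z * snd w + orient u w z * snd d = D * snd z"
    unfolding D_def orient_def by (simp add: algebra_simps)
  have "fst z = a * fst u + b * fst w + g * fst d"
    using idx D unfolding a_def b_def g_def by (simp add: field_simps)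
  moreover have "snd z = a * snd u + b * snd w + g * snd d"
    using idy D unfolding a_def b_def g_def by (simp add: field_simps)
  ultimately have e: "z = a *\<^sub>R u + b *\<^sub>R w + g *\<^sub>R d" by (simp add: prod_eq_iff)
  show ?thesis unfolding convex_hull_3 using nn s e by blast
qed

lemma strict_in_interior:
  assumes "strict_in u w d z"
  shows "z \<in> interior (convex hull {u, w, d})"
proof -
  define D where "D = orient u w d"
  let ?S = "{z. 0 < D * orient u w z} \<inter> {z. 0 < D * orient w d z} \<inter> {z. 0 < D * orient d u z}"
  have c: "\<And>p q. continuous_on UNIV (\<lambda>z. D * orient p q z)"
    unfolding orient_def by (intro continuous_intros)
  have "open ?S"
    by (intro open_Int open_Collect_less c continuous_on_const)
  moreover have "?S \<subseteq> convex hull {u, w, d}"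
  proof
    fix y assume "y \<in> ?S"
    then have "D \<noteq> 0" by auto
    then show "y \<in> convex hull {u, w, d}" using \<open>y \<in> ?S\<close>
      by (intro orient_hull3) (auto simp: D_def)
  qed
  moreover have "z \<in> ?S" using assms unfolding strict_in_def D_def by auto
  ultimately show ?thesis using interior_maximal by blast
qed


lemma tri_facts:
  assumes "triangulation P T" "t \<in> T"
  shows "t \<subseteq> P" "card t = 3" "\<not> collinear t" "convex hull t \<inter> P = t" "finite t"
  using assms unfolding triangulation_def by (auto intro: card_ge_0_finite)

lemma tri3:
  assumes "triangulation P T" "t \<in> T" "a \<in> t" "b \<in> t" "a \<noteq> b"
  shows "\<exists>d. t = {a, b, d} \<and> d \<noteq> a \<and> d \<noteq> b \<and> orient a b d \<noteq> 0"
proof -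
  have c3: "card t = 3" and fin: "finite t" and nc: "\<not> collinear t" using tri_facts[OF assms(1,2)] by auto
  have "card {a, b} = 2" using assms(5) by simp
  have "\<not> t \<subseteq> {a, b}"
  proof
    assume "t \<subseteq> {a, b}"
    then have "card t \<le> card {a, b}" by (intro card_mono) auto
    then show False using c3 \<open>card {a, b} = 2\<close> by simp
  qed
  then obtain d where d: "d \<in> t" "d \<noteq> a" "d \<noteq> b" by blast
  have "{a, b, d} \<subseteq> t" using assms d by auto
  moreover have "card {a, b, d} = 3" using d assms(5) by simp
  ultimately have t: "t = {a, b, d}" using c3 fin by (metis card_subset_eq)
  have "orient a b d \<noteq> 0" using collinear_of_orient[of a b d] assms(5) nc t by auto
  then show ?thesis using t d by blast
qed

lemma centroid_strict:
  assumes "orient u w d \<noteq> 0"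
  shows "strict_in u w d ((fst u + fst w + fst d) / 3, (snd u + snd w + snd d) / 3)"
proof -
  let ?c = "((fst u + fst w + fst d) / 3, (snd u + snd w + snd d) / 3)"
  have o1: "orient u w ?c = orient u w d / 3" and o2: "orient w d ?c = orient u w d / 3"
    and o3: "orient d u ?c = orient u w d / 3"
    unfolding orient_def by (simp_all add: field_simps)
  have "orient u w d * orient u w d > 0" using assms by (simp add: not_square_less_zero order_le_neq_trans)
  then have "orient u w d * (orient u w d / 3) > 0" by simp
  then show ?thesis unfolding strict_in_def o1 o2 o3 by simp
qed

lemma tri_interior_ne:
  assumes "triangulation P T" "t \<in> T"
  shows "interior (convex hull t) \<noteq> {}"
proof -
  obtain u w d where t: "t = {u, w, d}" "u \<noteq> w" "w \<noteq> d" "u \<noteq> d"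
    using tri_facts(2)[OF assms] card_3_iff by metis
  then have "orient u w d \<noteq> 0" using collinear_of_orient[of u w d] tri_facts(3)[OF assms] by auto
  then show ?thesis using strict_in_interior[OF centroid_strict] t by blast
qed

lemma core2:
  assumes "triangulation P T" "t \<in> T" "t' \<in> T" "t = {u, w, d}" "strict_in u w d z"
    "z \<in> convex hull t'"
  shows "t = t'"
proof (rule ccontr)
  assume ne: "t \<noteq> t'"
  have zi: "z \<in> interior (convex hull t)" using strict_in_interior[OF assms(5)] assms(4) by simp
  have fin: "finite t'" using tri_facts[OF assms(1,3)] by simp
  have cl: "closure (interior (convex hull t')) = convex hull t'"
    using convex_closure_interior[OF convex_convex_hull tri_interior_ne[OF assms(1,3)]]
      closure_closed[OF compact_imp_closed[OF compact_convex_hull[OF finite_imp_compact[OF fin]]]]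
    by simp
  have "interior (convex hull t) \<inter> closure (interior (convex hull t')) \<noteq> {}"
    using zi assms(6) cl by auto
  then have "interior (convex hull t) \<inter> interior (convex hull t') \<noteq> {}"
    using open_Int_closure_eq_empty[OF open_interior] by blast
  then show False using assms(1,2,3) ne unfolding triangulation_def by blast
qed

definition mv :: "pt \<Rightarrow> pt \<Rightarrow> real \<Rightarrow> pt" where
  "mv z r e = (fst z + e * fst r, snd z + e * snd r)"

definition cr :: "pt \<Rightarrow> pt \<Rightarrow> pt \<Rightarrow> real" where
  "cr p q r = (fst q - fst p) * snd r - (snd q - snd p) * fst r"

lemma orient_mv: "orient p q (mv z r e) = orient p q z + e * cr p q r"
  by (simp add: orient_def mv_def cr_def algebra_simps)

lemma small_pos:
  fixes A B :: real
  assumes "A > 0"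
  shows "\<exists>\<delta>>0. \<forall>e. 0 < e \<and> e < \<delta> \<longrightarrow> A + e * B > 0"
proof (intro exI[of _ "A / (\<bar>B\<bar> + 1)"] conjI allI impI)
  show "A / (\<bar>B\<bar> + 1) > 0" using assms by simp
  fix e assume e: "0 < e \<and> e < A / (\<bar>B\<bar> + 1)"
  then have "e * (\<bar>B\<bar> + 1) < A" by (simp add: pos_less_divide_eq)
  moreover have "- (e * \<bar>B\<bar>) \<le> e * B" using e by (cases "B \<ge> 0") auto
  ultimately show "A + e * B > 0" using e by (simp add: algebra_simps)
qed

lemma enter:
  assumes "orient u w d \<noteq> 0" "z = lin u w s" "0 < s" "s < 1" "orient u w d * cr u w r > 0"
  shows "\<exists>\<delta>>0. \<forall>e. 0 < e \<and> e < \<delta> \<longrightarrow> strict_in u w d (mv z r e)"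
proof -
  define D where "D = orient u w d"
  have DD: "D * D > 0" using assms(1) D_def by (simp add: not_square_less_zero order_le_neq_trans)
  have o1: "orient u w z = 0" using assms(2) by (simp add: orient_lin orient_self)
  have c1: "orient w d u = orient u w d" "orient d u w = orient u w d"
    by (simp_all add: orient_def algebra_simps)
  have o2: "orient w d z = (1 - s) * D" using assms(2) unfolding D_def
    by (simp add: orient_lin orient_self c1)
  have o3: "orient d u z = s * D" using assms(2) unfolding D_def
    by (simp add: orient_lin orient_self c1)
  obtain d1 where d1: "d1 > 0" "\<forall>e. 0 < e \<and> e < d1 \<longrightarrow> (1 - s) * (D * D) + e * (D * cr w d r) > 0"
    using small_pos[of "(1 - s) * (D * D)" "D * cr w d r"] DD assms(4) by auto
  obtain d2 where d2: "d2 > 0" "\<forall>e. 0 < e \<and> e < d2 \<longrightarrow> s * (D * D) + e * (D * cr d u r) > 0"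
    using small_pos[of "s * (D * D)" "D * cr d u r"] DD assms(3) by auto
  show ?thesis
  proof (intro exI[of _ "min d1 d2"] conjI allI impI)
    show "min d1 d2 > 0" using d1 d2 by simp
    fix e assume e: "0 < e \<and> e < min d1 d2"
    have q1: "D * orient u w (mv z r e) = e * (D * cr u w r)" by (simp add: orient_mv o1)
    have q2: "D * orient w d (mv z r e) = (1 - s) * (D * D) + e * (D * cr w d r)"
      by (simp add: orient_mv o2 algebra_simps)
    have q3: "D * orient d u (mv z r e) = s * (D * D) + e * (D * cr d u r)"
      by (simp add: orient_mv o3 algebra_simps)
    have p1: "0 < e * (D * cr u w r)" using e assms(5) D_def by simp
    have p2: "0 < (1 - s) * (D * D) + e * (D * cr w d r)" using e d1 by simp
    have p3: "0 < s * (D * D) + e * (D * cr d u r)" using e d2 by simp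
    show "strict_in u w d (mv z r e)" unfolding strict_in_def D_def[symmetric] q1 q2 q3
      using p1 p2 p3 by simp
  qed
qed

lemma not_strict:
  assumes "x \<in> {u, w, d}" "y \<in> {u, w, d}" "x \<noteq> y"
  shows "\<not> strict_in u w d (lin x y l)"
  using assms by (auto simp: strict_in_def orient_lin orient_self)


lemma edge_tri:
  assumes "{a, b} \<in> edges_of T"
  shows "\<exists>t\<in>T. a \<in> t \<and> b \<in> t"
proof -
  obtain x y t where "{a, b} = {x, y}" "t \<in> T" "x \<in> t" "y \<in> t"
    using assms unfolding edges_of_def by blast
  then show ?thesis by (metis doubleton_eq_iff)
qed

lemma edge_P:
  assumes "triangulation P T" "{a, b} \<in> edges_of T"
  shows "a \<in> P" "b \<in> P"
  using edge_tri[OF assms(2)] tri_facts(1)[OF assms(1)] by blast+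

lemma lin_mv: "mv (lin a b s) (fst b - fst a, snd b - snd a) k = lin a b (s + k)"
  by (simp add: mv_def lin_def algebra_simps)

lemma nc:
  assumes tri: "triangulation P T" and gp: "general_position P"
    and f: "{a, b} \<in> edges_of T" and g: "{a', b'} \<in> edges_of T" and ne: "a \<noteq> b" "a' \<noteq> b'"
    and m: "lin a b s = lin a' b' s'" and s: "0 < s" "s < 1" "0 < s'" "s' < 1"
  shows "{a, b} = {a', b'}"
proof (rule ccontr)
  assume neq: "{a, b} \<noteq> {a', b'}"
  obtain t where t: "t \<in> T" "a \<in> t" "b \<in> t" using edge_tri[OF f] by blast
  obtain t' where t': "t' \<in> T" "a' \<in> t'" "b' \<in> t'" using edge_tri[OF g] by blast
  obtain d where d: "t = {a, b, d}" "orient a b d \<noteq> 0" using tri3[OF tri t ne(1)] by blast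
  have P: "a \<in> P" "b \<in> P" "a' \<in> P" "b' \<in> P" using edge_P[OF tri f] edge_P[OF tri g] by auto
  define r where "r = (fst b' - fst a', snd b' - snd a')"
  have om: "orient a b (lin a b s) = 0" by (simp add: orient_lin orient_self)
  have "orient a b (lin a' b' s') = (1 - s') * orient a b a' + s' * orient a b b'"
    by (simp add: orient_lin)
  then have e1: "(1 - s') * orient a b a' + s' * orient a b b' = 0" using om m by simp
  have crr: "cr a b r = orient a b b' - orient a b a'" unfolding r_def cr_def orient_def
    by (simp add: algebra_simps)
  show False
  proof (cases "cr a b r = 0")
    case True
    then have "orient a b a' = orient a b b'" using crr by simp
    then have z: "orient a b a' = 0" "orient a b b' = 0" using e1 by (simp_all add: algebra_simps)
    have "a' \<in> {a, b}" using gp_orient[OF gp P(1,2,3) ne(1)] z by auto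
    moreover have "b' \<in> {a, b}" using gp_orient[OF gp P(1,2,4) ne(1)] z by auto
    ultimately show False using neq ne by auto
  next
    case False
    define D where "D = orient a b d"
    define sg :: real where "sg = (if D * cr a b r > 0 then 1 else -1)"
    define r2 where "r2 = (sg * fst r, sg * snd r)"
    have "cr a b r2 = sg * cr a b r" unfolding r2_def cr_def by (simp add: algebra_simps)
    moreover have "D \<noteq> 0" using d D_def by simp
    ultimately have pos: "D * cr a b r2 > 0" using False unfolding sg_def
      by (auto simp: mult_less_0_iff zero_less_mult_iff)
    obtain \<delta> where de: "\<delta> > 0" "\<forall>e. 0 < e \<and> e < \<delta> \<longrightarrow> strict_in a b d (mv (lin a b s) r2 e)"
      using enter[OF d(2) refl s(1,2)] pos D_def by blast
    define e where "e = min \<delta> (min s' (1 - s')) / 2"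
    have e: "0 < e" "e < \<delta>" "e < s'" "e < 1 - s'" using de s unfolding e_def by auto
    have st: "strict_in a b d (mv (lin a b s) r2 e)" using de e by auto
    have "mv (lin a b s) r2 e = mv (lin a' b' s') r (sg * e)" unfolding m r2_def mv_def by simp
    also have "\<dots> = lin a' b' (s' + sg * e)" unfolding r_def by (rule lin_mv)
    finally have eq: "mv (lin a b s) r2 e = lin a' b' (s' + sg * e)" .
    have "0 \<le> s' + sg * e" "s' + sg * e \<le> 1" using e unfolding sg_def by auto
    then have "lin a' b' (s' + sg * e) \<in> convex hull {a', b'}" by (rule lin_hull2)
    moreover have "convex hull {a', b'} \<subseteq> convex hull t'" using t' by (intro hull_mono) auto
    ultimately have "mv (lin a b s) r2 e \<in> convex hull t'" using eq by auto
    then have "t = t'" using core2[OF tri t(1) t'(1) d(1) st] by simp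
    then have "a' \<in> {a, b, d}" "b' \<in> {a, b, d}" using t' d by auto
    then show False using not_strict[of a' a b d b' "s' + sg * e"] st eq ne by auto
  qed
qed


definition sc :: "real \<Rightarrow> pt \<Rightarrow> pt \<Rightarrow> real" where
  "sc c a b = (c - fst a) / (fst b - fst a)"

definition Ycr :: "real \<Rightarrow> pt set \<Rightarrow> real" where
  "Ycr c f = (THE y. (c, y) \<in> convex hull f)"

abbreviation xing :: "real \<Rightarrow> pt \<Rightarrow> pt \<Rightarrow> bool" where
  "xing c a b \<equiv> (fst a - c) * (fst b - c) < 0"

lemma xing_ne: "xing c a b \<Longrightarrow> fst a \<noteq> fst b"
  by auto

lemma sc_bounds: assumes "xing c a b" shows "0 < sc c a b" "sc c a b < 1"
proof -
  have "fst a < c \<and> c < fst b \<or> fst b < c \<and> c < fst a" using assms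
    by (auto simp: mult_less_0_iff)
  then show "0 < sc c a b" "sc c a b < 1" unfolding sc_def
    by (auto simp: divide_pos_pos divide_neg_neg divide_less_eq)
qed

lemma fst_lin_sc: "xing c a b \<Longrightarrow> fst (lin a b (sc c a b)) = c"
  by (auto simp: lin_def sc_def)

lemma hull2_line:
  assumes "xing c a b" "x \<in> convex hull {a, b}" "fst x = c"
  shows "x = lin a b (sc c a b)"
proof -
  obtain l where l: "x = lin a b l" using closed_segment_lin assms(2) segment_convex_hull by metis
  have "fst a + l * (fst b - fst a) = c" using l assms(3) by (simp add: lin_def)
  then have "l = sc c a b" using xing_ne[OF assms(1)] unfolding sc_def by (simp add: field_simps)
  then show ?thesis using l by simp
qed

lemma Ycr_eq:
  assumes "xing c a b"
  shows "(c, Ycr c {a, b}) = lin a b (sc c a b)"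
proof -
  let ?p = "lin a b (sc c a b)"
  have p: "?p \<in> convex hull {a, b}" using sc_bounds[OF assms] by (intro lin_hull2) auto
  have fp: "fst ?p = c" using fst_lin_sc[OF assms] .
  have cp: "(c, snd ?p) = ?p" using fp by (simp add: prod_eq_iff)
  have u: "\<And>y. (c, y) \<in> convex hull {a, b} \<Longrightarrow> y = snd ?p"
    using hull2_line[OF assms] by (metis snd_conv fst_conv)
  have h: "(c, snd ?p) \<in> convex hull {a, b}" using p cp by simp
  have "Ycr c {a, b} = snd ?p" unfolding Ycr_def
    by (rule the_equality[where P="\<lambda>y. (c, y) \<in> convex hull {a, b}", OF h u])
  then show ?thesis using fp by (simp add: prod_eq_iff)
qed

lemma Ycr_hull:
  assumes "xing c a b"
  shows "(c, Ycr c {a, b}) \<in> convex hull {a, b}"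
  using Ycr_eq[OF assms] sc_bounds[OF assms] lin_hull2 by (metis less_eq_real_def)

lemma hull2_vline:
  assumes "xing c a b"
  shows "convex hull {a, b} \<inter> vline c = {(c, Ycr c {a, b})}"
proof
  show "convex hull {a, b} \<inter> vline c \<subseteq> {(c, Ycr c {a, b})}"
  proof
    fix x assume "x \<in> convex hull {a, b} \<inter> vline c"
    then have "x \<in> convex hull {a, b}" "fst x = c" by (auto simp: vline_def)
    then show "x \<in> {(c, Ycr c {a, b})}" using hull2_line[OF assms] Ycr_eq[OF assms] by simp
  qed
  show "{(c, Ycr c {a, b})} \<subseteq> convex hull {a, b} \<inter> vline c"
    using Ycr_hull[OF assms] by (simp add: vline_def)
qed

lemma orient_vline:
  assumes "xing c a b"
  shows "orient a b (c, y) = (fst b - fst a) * (y - Ycr c {a, b})"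
proof -
  have "snd (c, Ycr c {a, b}) = snd (lin a b (sc c a b))" using Ycr_eq[OF assms] by simp
  then have Y: "Ycr c {a, b} = snd a + sc c a b * (snd b - snd a)" by (simp add: lin_def)
  show ?thesis unfolding Y orient_def sc_def using xing_ne[OF assms]
    by (simp add: field_simps)
qed

lemma sign_aux:
  fixes X Y L :: real
  assumes "X * L > 0" "Y * L > 0" shows "X * Y > 0"
  using assms by (auto simp: zero_less_mult_iff)


lemma convex_side_gt: "convex {z::pt. k * (fst z - c) > 0}"
proof -
  have "{z::pt. k * (fst z - c) > 0} = {x. inner (k, 0) x > k * c}"
    by (auto simp: algebra_simps inner_commute inner_Pair_0)
  then show ?thesis using convex_halfspace_gt by metis
qed

lemma convex_side_ge: "convex {z::pt. k * (fst z - c) \<ge> 0}"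
proof -
  have "{z::pt. k * (fst z - c) \<ge> 0} = {x. inner (k, 0) x \<ge> k * c}"
    by (auto simp: algebra_simps inner_commute inner_Pair_0)
  then show ?thesis using convex_halfspace_ge by metis
qed

lemma hull_side_gt:
  fixes S :: "pt set" and z :: pt
  assumes "\<forall>x\<in>S. k * (fst x - c) > 0" "z \<in> convex hull S"
  shows "k * (fst z - c) > 0"
proof -
  have "convex hull S \<subseteq> {z::pt. k * (fst z - c) > 0}"
    using assms(1) by (intro hull_minimal convex_side_gt) auto
  then show ?thesis using assms(2) by auto
qed

lemma hull_side_ge:
  fixes S :: "pt set" and z :: pt
  assumes "\<forall>x\<in>S. k * (fst x - c) \<ge> 0" "z \<in> convex hull S"
  shows "k * (fst z - c) \<ge> 0"
proof -
  have "convex hull S \<subseteq> {z::pt. k * (fst z - c) \<ge> 0}"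
    using assms(1) by (intro hull_minimal convex_side_ge) auto
  then show ?thesis using assms(2) by auto
qed

lemma sg1: "(A::real) > 0 \<Longrightarrow> 0 \<le> A * x \<Longrightarrow> 0 \<le> x" by (simp add: zero_le_mult_iff)
lemma sg2: "(A::real) > 0 \<Longrightarrow> A * x \<le> 0 \<Longrightarrow> x \<le> 0" by (simp add: mult_le_0_iff)
lemma sg3: "(A::real) < 0 \<Longrightarrow> 0 \<le> A * x \<Longrightarrow> x \<le> 0" by (simp add: zero_le_mult_iff)
lemma sg4: "(A::real) < 0 \<Longrightarrow> A * x \<le> 0 \<Longrightarrow> 0 \<le> x" by (simp add: mult_le_0_iff)
lemma sg5: "0 < (A::real) * x \<Longrightarrow> 0 < x \<Longrightarrow> 0 < A" by (simp add: zero_less_mult_iff)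
lemma sg6: "0 < (A::real) * x \<Longrightarrow> x < 0 \<Longrightarrow> A < 0" by (simp add: zero_less_mult_iff)

lemma orient_tri:
  assumes "t = {u, w, d}" "\<not> collinear t" "u \<noteq> w"
  shows "orient u w d \<noteq> 0"
  using collinear_of_orient[of u w d] assms by auto

locale chord =
  fixes c :: real and u w d :: pt
  assumes D: "orient u w d \<noteq> 0" and xw: "xing c u w" and xd: "xing c u d"
begin

definition "Yw = Ycr c {u, w}"
definition "Yd = Ycr c {u, d}"
definition "sw = sc c u w"
definition "sd = sc c u d"

lemma Pw: "(c, Yw) = lin u w sw" unfolding Yw_def sw_def using Ycr_eq[OF xw] .
lemma Pd: "(c, Yd) = lin u d sd" unfolding Yd_def sd_def using Ycr_eq[OF xd] .
lemma swb: "0 < sw" "sw < 1" unfolding sw_def using sc_bounds[OF xw] by auto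
lemma sdb: "0 < sd" "sd < 1" unfolding sd_def using sc_bounds[OF xd] by auto

lemma ow: "orient u w (c, y) = (fst w - fst u) * (y - Yw)"
  unfolding Yw_def using orient_vline[OF xw] .
lemma od: "orient u d (c, y) = (fst d - fst u) * (y - Yd)"
  unfolding Yd_def using orient_vline[OF xd] .

lemma DD: "orient u w d * orient u w d > 0"
  using D by (simp add: not_square_less_zero order_le_neq_trans)

lemma K1: "orient u w d * (fst w - fst u) * (Yd - Yw) > 0"
proof -
  have "orient u w (c, Yd) = sd * orient u w d" using Pd by (simp add: orient_lin orient_self)
  then have e: "(fst w - fst u) * (Yd - Yw) = sd * orient u w d" using ow[of Yd] by simp
  have "orient u w d * (fst w - fst u) * (Yd - Yw) = orient u w d * ((fst w - fst u) * (Yd - Yw))"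
    by (simp only: mult.assoc)
  also have "\<dots> = sd * (orient u w d * orient u w d)" by (simp only: e ac_simps)
  finally have eq: "orient u w d * (fst w - fst u) * (Yd - Yw) = sd * (orient u w d * orient u w d)" .
  show ?thesis unfolding eq by (rule mult_pos_pos[OF sdb(1) DD])
qed

lemma K2: "orient u w d * (fst d - fst u) * (Yd - Yw) > 0"
proof -
  have c1: "orient u d w = - orient u w d" by (simp add: orient_def algebra_simps)
  have "orient u d (c, Yw) = sw * orient u d w" using Pw by (simp add: orient_lin orient_self)
  then have e: "(fst d - fst u) * (Yw - Yd) = - (sw * orient u w d)" using od[of Yw] c1 by simp
  have "orient u w d * (fst d - fst u) * (Yd - Yw) = - (orient u w d * ((fst d - fst u) * (Yw - Yd)))"
    by (simp add: algebra_simps)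
  also have "\<dots> = sw * (orient u w d * orient u w d)" by (simp only: e) (simp add: ac_simps)
  finally have eq: "orient u w d * (fst d - fst u) * (Yd - Yw) = sw * (orient u w d * orient u w d)" .
  show ?thesis unfolding eq by (rule mult_pos_pos[OF swb(1) DD])
qed

lemma Yne: "Yw \<noteq> Yd" using K1 by auto

lemma closed_chord:
  assumes "(c, y) \<in> convex hull {u, w, d}"
  shows "(y - Yw) * (y - Yd) \<le> 0"
proof -
  define D where "D = orient u w d"
  have h: "D * orient u w (c, y) \<ge> 0" "D * orient d u (c, y) \<ge> 0"
    using hull3_orient[OF assms] D_def by auto
  have c1: "orient d u (c, y) = - orient u d (c, y)" by (simp add: orient_def algebra_simps)
  have a1: "(D * (fst w - fst u)) * (y - Yw) \<ge> 0" using h(1) ow[of y] by (simp add: mult.assoc)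
  have a2: "(D * (fst d - fst u)) * (y - Yd) \<le> 0" using h(2) od[of y] c1 by (simp add: mult.assoc)
  have k1: "(D * (fst w - fst u)) * (Yd - Yw) > 0" using K1 D_def by simp
  have k2: "(D * (fst d - fst u)) * (Yd - Yw) > 0" using K2 D_def by simp
  show ?thesis
  proof (cases "Yd - Yw > 0")
    case True
    then have "D * (fst w - fst u) > 0" "D * (fst d - fst u) > 0" using k1 k2 sg5 by blast+
    then have "y - Yw \<ge> 0" "y - Yd \<le> 0" using a1 a2 sg1 sg2 by blast+
    then show ?thesis by (simp add: mult_nonneg_nonpos)
  next
    case False
    then have "Yd - Yw < 0" using Yne by auto
    then have "D * (fst w - fst u) < 0" "D * (fst d - fst u) < 0" using k1 k2 sg6 by blast+
    then have "y - Yw \<le> 0" "y - Yd \<ge> 0" using a1 a2 sg3 sg4 by blast+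
    then show ?thesis by (simp add: mult_nonpos_nonneg)
  qed
qed

lemma strict_chord:
  assumes "(y - Yw) * (y - Yd) < 0"
  shows "strict_in u w d (c, y)"
proof -
  define D where "D = orient u w d"
  have c1: "orient d u (c, y) = - orient u d (c, y)" by (simp add: orient_def algebra_simps)
  have k1: "(D * (fst w - fst u)) * (Yd - Yw) > 0" using K1 D_def by simp
  have k2: "(D * (fst d - fst u)) * (Yd - Yw) > 0" using K2 D_def by simp
  have s12: "D * orient u w (c, y) > 0 \<and> D * orient d u (c, y) > 0"
  proof (cases "Yd - Yw > 0")
    case True
    then have "D * (fst w - fst u) > 0" "D * (fst d - fst u) > 0" using k1 k2 sg5 by blast+
    moreover have "y - Yw > 0" "y - Yd < 0" using assms True by (auto simp: mult_less_0_iff)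
    ultimately show ?thesis using ow[of y] od[of y] c1
      by (simp add: mult.assoc[symmetric] mult_pos_neg)
  next
    case False
    then have "Yd - Yw < 0" using Yne by auto
    then have "D * (fst w - fst u) < 0" "D * (fst d - fst u) < 0" using k1 k2 sg6 by blast+
    moreover have "y - Yw < 0" "y - Yd > 0" using assms \<open>Yd - Yw < 0\<close> by (auto simp: mult_less_0_iff)
    ultimately show ?thesis using ow[of y] od[of y] c1
      by (simp add: mult.assoc[symmetric] mult_neg_neg mult_neg_pos)
  qed
  define mu where "mu = (y - Yw) / (Yd - Yw)"
  have mub: "0 < mu" "mu < 1" using assms Yne unfolding mu_def
    by (auto simp: mult_less_0_iff divide_less_eq zero_less_divide_iff)
  have "(c, y) = lin (c, Yw) (c, Yd) mu" using Yne unfolding mu_def lin_def by simp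
  then have e0: "orient w d (c, y) = (1 - mu) * orient w d (c, Yw) + mu * orient w d (c, Yd)"
    by (simp add: orient_lin)
  have c2: "orient w d u = D" unfolding D_def by (simp add: orient_def algebra_simps)
  have e1: "orient w d (c, Yw) = (1 - sw) * D" unfolding Pw
    by (simp add: orient_lin orient_self c2)
  have e2: "orient w d (c, Yd) = (1 - sd) * D" unfolding Pd
    by (simp add: orient_lin orient_self c2)
  have eq: "D * orient w d (c, y) = ((1 - mu) * (1 - sw) + mu * (1 - sd)) * (D * D)"
    unfolding e0 e1 e2 by (simp add: algebra_simps)
  have "(1 - mu) * (1 - sw) + mu * (1 - sd) > 0" using mub swb sdb
    by (simp add: add_pos_pos)
  then have "D * orient w d (c, y) > 0" unfolding eq using DD D_def by (simp only: mult_pos_pos)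
  then show ?thesis using s12 unfolding strict_in_def D_def by simp
qed

end


locale setting =
  fixes P :: "pt set" and T :: "pt set set" and c :: real
  assumes finP: "finite P" and gp: "general_position P" and tri: "triangulation P T"
    and sep: "separating_vline P c"
begin

lemma offline: "x \<in> P \<Longrightarrow> fst x \<noteq> c"
  using sep unfolding separating_vline_def vline_def by auto

lemma lone:
  assumes "t \<in> T" "t = {u, w, d}" "u \<noteq> w" "xing c u w" "xing c u d" "(c, y) \<in> convex hull t"
  shows "\<exists>u w d. t = {u, w, d} \<and> chord c u w d \<and> (y - Ycr c {u, w}) * (y - Ycr c {u, d}) \<le> 0"
proof -
  have "orient u w d \<noteq> 0" using orient_tri[OF assms(2) tri_facts(3)[OF tri assms(1)] assms(3)] .
  then have ch: "chord c u w d" using assms(4,5) by unfold_locales auto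
  have "(y - chord.Yw c u w) * (y - chord.Yd c u d) \<le> 0"
    using chord.closed_chord[OF ch] assms(2,6) by auto
  then show ?thesis using ch assms(2) unfolding chord.Yw_def[OF ch] chord.Yd_def[OF ch] by blast
qed

lemma chord_closed:
  assumes "t \<in> T" "(c, y) \<in> convex hull t"
  shows "\<exists>u w d. t = {u, w, d} \<and> chord c u w d \<and> (y - Ycr c {u, w}) * (y - Ycr c {u, d}) \<le> 0"
proof -
  obtain x1 x2 x3 where t: "t = {x1, x2, x3}" "x1 \<noteq> x2" "x2 \<noteq> x3" "x1 \<noteq> x3"
    using tri_facts(2)[OF tri assms(1)] card_3_iff by metis
  have inP: "x1 \<in> P" "x2 \<in> P" "x3 \<in> P" using tri_facts(1)[OF tri assms(1)] t by auto
  define k1 where "k1 = fst x1 - c"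
  define k2 where "k2 = fst x2 - c"
  define k3 where "k3 = fst x3 - c"
  have nz: "k1 \<noteq> 0" "k2 \<noteq> 0" "k3 \<noteq> 0" using offline inP unfolding k1_def k2_def k3_def by auto
  consider "k1 * k2 > 0 \<and> k1 * k3 > 0" | "k1 * k2 < 0 \<and> k1 * k3 < 0" | "k1 * k2 < 0 \<and> k1 * k3 > 0"
    | "k1 * k2 > 0 \<and> k1 * k3 < 0"
    using nz by (metis linorder_neqE_linordered_idom mult_eq_0_iff)
  then show ?thesis
  proof cases
    case 1
    then have "\<forall>x\<in>t. k1 * (fst x - c) > 0" using t nz unfolding k1_def k2_def k3_def
      by (auto simp: zero_less_mult_iff)
    then have "k1 * (fst (c, y) - c) > 0" using hull_side_gt assms(2) by blast
    then show ?thesis by simp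
  next
    case 2
    then show ?thesis using lone[OF assms(1) t(1) t(2) _ _ assms(2)] unfolding k1_def k2_def k3_def by auto
  next
    case 3
    then have "k2 * k1 < 0" "k2 * k3 < 0" using nz
      by (auto simp: mult_less_0_iff zero_less_mult_iff)
    moreover have "t = {x2, x1, x3}" using t by auto
    ultimately show ?thesis using lone[OF assms(1) _ _ _ _ assms(2), of x2 x1 x3] t
      unfolding k1_def k2_def k3_def by auto
  next
    case 4
    then have "k3 * k1 < 0" "k3 * k2 < 0" using nz
      by (auto simp: mult_less_0_iff zero_less_mult_iff)
    moreover have "t = {x3, x1, x2}" using t by auto
    ultimately show ?thesis using lone[OF assms(1) _ _ _ _ assms(2), of x3 x1 x2] t
      unfolding k1_def k2_def k3_def by auto
  qed
qed

lemma same_cross: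
  assumes "{a, b} \<in> edges_of T" "{a', b'} \<in> edges_of T" "xing c a b" "xing c a' b'"
    "Ycr c {a, b} = Ycr c {a', b'}"
  shows "{a, b} = {a', b'}"
proof -
  have "lin a b (sc c a b) = lin a' b' (sc c a' b')" using Ycr_eq[OF assms(3)] Ycr_eq[OF assms(4)] assms(5)
    by simp
  moreover have "a \<noteq> b" "a' \<noteq> b'" using assms(3,4) by auto
  ultimately show ?thesis using nc[OF tri gp assms(1,2)] sc_bounds[OF assms(3)] sc_bounds[OF assms(4)] by blast
qed

lemma open_chord:
  assumes "t \<in> T" "t = {u, w, d}" "chord c u w d"
    "(Ycr c {a, b} - Ycr c {u, w}) * (Ycr c {a, b} - Ycr c {u, d}) < 0"
    "{a, b} \<in> edges_of T" "xing c a b"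
  shows False
proof -
  let ?y = "Ycr c {a, b}"
  have st: "strict_in u w d (c, ?y)" using chord.strict_chord[OF assms(3)] assms(4)
    unfolding chord.Yw_def[OF assms(3)] chord.Yd_def[OF assms(3)] by blast
  obtain t' where t': "t' \<in> T" "a \<in> t'" "b \<in> t'" using edge_tri[OF assms(5)] by blast
  have "(c, ?y) \<in> convex hull {a, b}" using Ycr_hull[OF assms(6)] .
  moreover have "convex hull {a, b} \<subseteq> convex hull t'" using t' by (intro hull_mono) auto
  ultimately have "t = t'" using core2[OF tri assms(1) t'(1) assms(2) st] by auto
  then have "a \<in> {u, w, d}" "b \<in> {u, w, d}" using t' assms(2) by auto
  moreover have "a \<noteq> b" using assms(6) by auto
  ultimately show False using not_strict[of a u w d b "sc c a b"] st Ycr_eq[OF assms(6)] by auto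
qed

end


lemma lin_lin1: "lin p (lin p q s) t = lin p q (t * s)"
  by (simp add: lin_def algebra_simps)
lemma lin_lin2: "lin (lin p q s) p m = lin p q ((1 - m) * s)"
  by (simp add: lin_def algebra_simps)
lemma lin_0: "lin p q 0 = p" by (simp add: lin_def)

context setting
begin

lemma on_line:
  assumes K: "orient v (c, Y1) (c, Y2) \<noteq> 0" and o1: "orient v (c, Y1) m = 0"
    and o2: "orient v (c, Y1) (c, Y2) * orient v (c, Y2) m \<le> 0"
    and side: "(fst m - c) * (fst v - c) > 0"
  shows "\<exists>\<tau>. 0 \<le> \<tau> \<and> \<tau> < 1 \<and> m = lin v (c, Y1) \<tau>"
proof -
  define K where "K = orient v (c, Y1) (c, Y2)"
  have Kf: "K = (c - fst v) * (Y2 - Y1)" unfolding K_def orient_def by (simp add: algebra_simps)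
  have vc: "c - fst v \<noteq> 0" using K Kf K_def by auto
  define \<tau> where "\<tau> = (fst m - fst v) / (c - fst v)"
  have "(c - fst v) * (snd m - snd v) = (Y1 - snd v) * (fst m - fst v)"
    using o1 unfolding orient_def by simp
  then have "snd m = snd v + \<tau> * (Y1 - snd v)" using vc unfolding \<tau>_def
    by (simp add: field_simps)
  moreover have fm: "fst m = fst v + \<tau> * (c - fst v)" using vc unfolding \<tau>_def by simp
  ultimately have m: "m = lin v (c, Y1) \<tau>" by (simp add: lin_def prod_eq_iff)
  have "orient v (c, Y2) m = \<tau> * orient v (c, Y2) (c, Y1)" unfolding m
    by (simp add: orient_lin orient_self)
  moreover have "orient v (c, Y2) (c, Y1) = - K" unfolding K_def orient_def by (simp add: algebra_simps)
  ultimately have "K * orient v (c, Y2) m = - (\<tau> * (K * K))" by simp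
  then have "\<tau> * (K * K) \<ge> 0" using o2 K_def by simp
  moreover have "K * K > 0" using K K_def by (simp add: not_square_less_zero order_le_neq_trans)
  ultimately have t0: "\<tau> \<ge> 0" using sg1[of "K * K" \<tau>] by (simp add: mult.commute)
  have "(fst m - c) * (fst v - c) = (1 - \<tau>) * ((c - fst v) * (c - fst v))"
    unfolding fm by (simp add: algebra_simps)
  then have "(1 - \<tau>) * ((c - fst v) * (c - fst v)) > 0" using side by simp
  moreover have "(c - fst v) * (c - fst v) > 0" using vc by (simp add: not_square_less_zero order_le_neq_trans)
  ultimately have "1 - \<tau> > 0" using sg5 by blast
  then show ?thesis using t0 m by auto
qed

lemma concl:
  assumes f: "{v, w} \<in> edges_of T" "xing c v w" and h: "{a, b} \<in> edges_of T" "xing c a b"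
    and side: "(fst a - c) * (fst v - c) > 0"
    and m1: "m = lin v (c, Ycr c {v, w}) \<tau>" "0 \<le> \<tau>" "\<tau> < 1"
    and m2: "m = lin (c, Ycr c {a, b}) a \<mu>" "0 < \<mu>" "\<mu> < 1"
  shows "a = v"
proof -
  have sf: "0 < sc c v w" "sc c v w < 1" using sc_bounds[OF f(2)] by auto
  have sh: "0 < sc c a b" "sc c a b < 1" using sc_bounds[OF h(2)] by auto
  have ma: "m = lin a b ((1 - \<mu>) * sc c a b)" using m2(1) Ycr_eq[OF h(2)] lin_lin2 by simp
  have mv: "m = lin v w (\<tau> * sc c v w)" using m1(1) Ycr_eq[OF f(2)] lin_lin1 by simp
  have th1: "0 < (1 - \<mu>) * sc c a b" using sh m2(3) by (intro mult_pos_pos) auto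
  have lt: "(1 - \<mu>) * sc c a b < sc c a b" using mult_strict_right_mono[of "1 - \<mu>" 1 "sc c a b"] sh m2(2) by simp
  have th: "0 < (1 - \<mu>) * sc c a b" "(1 - \<mu>) * sc c a b < 1" using th1 lt sh by linarith+
  have P: "v \<in> P" "w \<in> P" "a \<in> P" "b \<in> P" using edge_P[OF tri f(1)] edge_P[OF tri h(1)] by auto
  have ab: "a \<noteq> b" "v \<noteq> w" using h(2) f(2) by auto
  show ?thesis
  proof (cases "\<tau> = 0")
    case True
    then have "v = lin a b ((1 - \<mu>) * sc c a b)" using ma mv lin_0 by simp
    then show ?thesis using gp_seg[OF gp P(3,4,1) ab(1) _ th] by blast
  next
    case False
    then have t1: "0 < \<tau> * sc c v w" using m1(2) sf by (intro mult_pos_pos) auto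
    have lt2: "\<tau> * sc c v w < sc c v w" using mult_strict_right_mono[of \<tau> 1 "sc c v w"] sf m1(3) by simp
    have "0 < \<tau> * sc c v w" "\<tau> * sc c v w < 1" using t1 lt2 sf by linarith+
    then have "{v, w} = {a, b}" using nc[OF tri gp f(1) h(1) ab(2) ab(1)] ma mv th by metis
    moreover have "a \<noteq> w" using side f(2) by (auto simp: mult_less_0_iff zero_less_mult_iff)
    ultimately show ?thesis by auto
  qed
qed

end


lemma btw_frac:
  fixes y A B :: real
  assumes "(y - A) * (y - B) < 0"
  shows "0 < (y - A) / (B - A)" "(y - A) / (B - A) < 1"
  using assms by (auto simp: mult_less_0_iff divide_less_eq zero_less_divide_iff)

lemma zero_cross:
  fixes F0 F1 :: real
  assumes "F0 > 0" "F1 < 0"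
  shows "0 < F0 / (F0 - F1)" "F0 / (F0 - F1) < 1" "(1 - F0 / (F0 - F1)) * F0 + F0 / (F0 - F1) * F1 = 0"
proof -
  have d: "F0 - F1 > 0" using assms by simp
  show "0 < F0 / (F0 - F1)" using assms d by simp
  show "F0 / (F0 - F1) < 1" using assms d by (simp add: divide_less_eq)
  show "(1 - F0 / (F0 - F1)) * F0 + F0 / (F0 - F1) * F1 = 0" using d by (simp add: field_simps)
qed

lemma zero_cross':
  fixes G0 G1 :: real
  assumes "G0 < 0" "G1 > 0"
  shows "0 < G0 / (G0 - G1)" "G0 / (G0 - G1) < 1" "(1 - G0 / (G0 - G1)) * G0 + G0 / (G0 - G1) * G1 = 0"
proof -
  have d: "G0 - G1 < 0" using assms by simp
  show "0 < G0 / (G0 - G1)" using assms d by (simp add: divide_neg_neg)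
  show "G0 / (G0 - G1) < 1" using assms d by (simp add: divide_less_eq)
  show "(1 - G0 / (G0 - G1)) * G0 + G0 / (G0 - G1) * G1 = 0" using d by (simp add: field_simps)
qed

lemma affine_le:
  fixes G0 G1 m m' :: real
  assumes "(1 - m') * G0 + m' * G1 = 0" "m \<le> m'" "G1 - G0 \<ge> 0"
  shows "(1 - m) * G0 + m * G1 \<le> 0"
proof -
  have "(1 - m) * G0 + m * G1 = G0 + m * (G1 - G0)" by (simp add: algebra_simps)
  also have "\<dots> \<le> G0 + m' * (G1 - G0)" using assms(2,3) by (simp add: mult_right_mono)
  also have "\<dots> = (1 - m') * G0 + m' * G1" by (simp add: algebra_simps)
  finally show ?thesis using assms(1) by simp
qed

lemma affine_ge:
  fixes F0 F1 m m' :: real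
  assumes "(1 - m') * F0 + m' * F1 = 0" "m \<le> m'" "F1 - F0 \<le> 0"
  shows "(1 - m) * F0 + m * F1 \<ge> 0"
  using affine_le[of m' "-F0" "-F1" m] assms by (simp add: algebra_simps)

context setting
begin

lemma fan:
  assumes f: "{v, w} \<in> edges_of T" "xing c v w" and g: "{v, w'} \<in> edges_of T" "xing c v w'"
    and reg: "convex hull {v, (c, Ycr c {v, w}), (c, Ycr c {v, w'})} \<inter> P \<subseteq> {v}"
    and h: "{a, b} \<in> edges_of T" "xing c a b" and side: "(fst a - c) * (fst v - c) > 0"
    and btw: "(Ycr c {a, b} - Ycr c {v, w}) * (Ycr c {a, b} - Ycr c {v, w'}) < 0"
  shows "a = v"
proof (rule ccontr)
  assume anv: "a \<noteq> v"
  define Yf where "Yf = Ycr c {v, w}"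
  define Yg where "Yg = Ycr c {v, w'}"
  define Yh where "Yh = Ycr c {a, b}"
  define K where "K = orient v (c, Yf) (c, Yg)"
  have Kf: "K = (c - fst v) * (Yg - Yf)" unfolding K_def orient_def by (simp add: algebra_simps)
  have aP: "a \<in> P" using edge_P[OF tri h(1)] by simp
  have vc: "fst v \<noteq> c" using f(2) by auto
  have fg: "Yf \<noteq> Yg" using btw unfolding Yf_def Yg_def by auto
  have K0: "K \<noteq> 0" using Kf vc fg by simp
  have KK: "K * K > 0" using K0 by (simp add: not_square_less_zero order_le_neq_trans)
  define lam where "lam = (Yh - Yf) / (Yg - Yf)"
  have lam: "0 < lam" "lam < 1" using btw_frac[of Yh Yf Yg] btw unfolding lam_def Yf_def Yg_def Yh_def
    by auto
  have zh: "(c, Yh) = lin (c, Yf) (c, Yg) lam" using fg unfolding lam_def lin_def by simp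
  have cK: "orient v (c, Yg) (c, Yf) = - K" unfolding K_def orient_def by (simp add: algebra_simps)
  define F0 where "F0 = K * orient v (c, Yf) (c, Yh)"
  define G0 where "G0 = K * orient v (c, Yg) (c, Yh)"
  define F1 where "F1 = K * orient v (c, Yf) a"
  define G1 where "G1 = K * orient v (c, Yg) a"
  have F0: "F0 = lam * (K * K)" unfolding F0_def zh K_def by (simp add: orient_lin orient_self)
  have G0: "G0 = - ((1 - lam) * (K * K))" unfolding G0_def zh
    by (simp add: orient_lin orient_self cK)
  have F0p: "F0 > 0" unfolding F0 using lam KK by simp
  have G0n: "G0 < 0" unfolding G0 using lam KK by simp
  define S where "S = (\<lambda>m. lin (c, Yh) a m)"
  have FS: "\<And>m. K * orient v (c, Yf) (S m) = (1 - m) * F0 + m * F1"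
    unfolding S_def F0_def F1_def by (simp add: orient_lin algebra_simps)
  have GS: "\<And>m. K * orient v (c, Yg) (S m) = (1 - m) * G0 + m * G1"
    unfolding S_def G0_def G1_def by (simp add: orient_lin algebra_simps)
  have sideS: "\<And>m. m > 0 \<Longrightarrow> (fst (S m) - c) * (fst v - c) > 0"
  proof -
    fix m :: real assume "m > 0"
    have e: "(fst (S m) - c) * (fst v - c) = m * ((fst a - c) * (fst v - c))"
      unfolding S_def lin_def by (simp add: algebra_simps)
    show "(fst (S m) - c) * (fst v - c) > 0" unfolding e using \<open>m > 0\<close> side by (rule mult_pos_pos)
  qed
  have finish_f: "False" if m: "0 < m" "m < 1" "orient v (c, Yf) (S m) = 0" "K * orient v (c, Yg) (S m) \<le> 0" for m
  proof -
    obtain \<tau> where t: "0 \<le> \<tau>" "\<tau> < 1" "S m = lin v (c, Yf) \<tau>"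
      using on_line[of v Yf Yg "S m"] K0 m sideS[OF m(1)] unfolding K_def by blast
    have "a = v" using concl[OF f h side t(3)[unfolded Yf_def] t(1,2) _ m(1,2)] unfolding S_def Yh_def by simp
    then show False using anv by simp
  qed
  have finish_g: "False" if m: "0 < m" "m < 1" "orient v (c, Yg) (S m) = 0" "K * orient v (c, Yf) (S m) \<ge> 0" for m
  proof -
    have "orient v (c, Yg) (c, Yf) * orient v (c, Yf) (S m) \<le> 0" using m(4) cK by simp
    then obtain \<tau> where t: "0 \<le> \<tau>" "\<tau> < 1" "S m = lin v (c, Yg) \<tau>"
      using on_line[of v Yg Yf "S m"] K0 cK m sideS[OF m(1)] by auto
    have "a = v" using concl[OF g h side t(3)[unfolded Yg_def] t(1,2) _ m(1,2)] unfolding S_def Yh_def by simp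
    then show False using anv by simp
  qed
  define muF where "muF = F0 / (F0 - F1)"
  define muG where "muG = G0 / (G0 - G1)"
  show False
  proof (cases "F1 \<ge> 0 \<and> G1 \<le> 0")
    case True
    have o3: "K * orient (c, Yf) (c, Yg) a = ((fst a - c) * (fst v - c)) * ((Yg - Yf) * (Yg - Yf))"
      unfolding Kf orient_def by (simp add: algebra_simps)
    have "K * orient (c, Yf) (c, Yg) a \<ge> 0" unfolding o3 using side by simp
    moreover have "orient (c, Yg) v a = - orient v (c, Yg) a" by (simp add: orient_def algebra_simps)
    ultimately have "a \<in> convex hull {v, (c, Yf), (c, Yg)}"
      using True K0 unfolding F1_def G1_def K_def by (intro orient_hull3) auto
    then have "a \<in> {v}" using reg aP unfolding Yf_def Yg_def by blast
    then show False using anv by simp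
  next
    case False
    then consider "F1 < 0 \<and> (G1 \<le> 0 \<or> muF \<le> muG)" | "G1 > 0 \<and> (F1 \<ge> 0 \<or> muG < muF)" by linarith
    then show False
    proof cases
      case 1
      have z: "0 < muF" "muF < 1" "(1 - muF) * F0 + muF * F1 = 0"
        using zero_cross[OF F0p] 1 unfolding muF_def by auto
      have "(1 - muF) * G0 + muF * G1 \<le> 0"
      proof (cases "G1 \<le> 0")
        case True
        then show ?thesis using z G0n by (simp add: add_nonpos_nonpos mult_nonneg_nonpos)
      next
        case False
        then have "muF \<le> muG" using 1 by simp
        moreover have "(1 - muG) * G0 + muG * G1 = 0" using zero_cross'[OF G0n] False unfolding muG_def by simp
        ultimately show ?thesis using affine_le False G0n by simp
      qed
      then have "K * orient v (c, Yg) (S muF) \<le> 0" using GS by simp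
      moreover have "orient v (c, Yf) (S muF) = 0" using FS[of muF] z K0 by simp
      ultimately show False using finish_f z by blast
    next
      case 2
      have z: "0 < muG" "muG < 1" "(1 - muG) * G0 + muG * G1 = 0"
        using zero_cross'[OF G0n] 2 unfolding muG_def by auto
      have "(1 - muG) * F0 + muG * F1 \<ge> 0"
      proof (cases "F1 \<ge> 0")
        case True
        then show ?thesis using z F0p by simp
      next
        case False
        then have "muG < muF" using 2 by simp
        moreover have "(1 - muF) * F0 + muF * F1 = 0" using zero_cross[OF F0p] False unfolding muF_def by simp
        ultimately show ?thesis using affine_ge[of muF F0 F1 muG] False F0p by simp
      qed
      then have "K * orient v (c, Yf) (S muG) \<ge> 0" using FS by simp
      moreover have "orient v (c, Yg) (S muG) = 0" using GS[of muG] z K0 by simp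
      ultimately show False using finish_g z by blast
    qed
  qed
qed

end


lemma seg_int:
  fixes S :: "pt set"
  assumes "convex S" "a \<in> closure S" "b \<in> closure S" "lin a b sm \<in> interior S"
    "0 \<le> sm" "sm \<le> 1" "0 < s0" "s0 < 1"
  shows "lin a b s0 \<in> interior S"
proof (cases "sm < s0")
  case True
  define e where "e = (1 - s0) / (1 - sm)"
  have e: "0 < e" "e \<le> 1" using True assms(7,8) unfolding e_def by (auto simp: divide_le_eq)
  have ee: "e * (1 - sm) = 1 - s0" using True assms(8) unfolding e_def by simp
  have co: "l - e * (l - (k + sm * (l - k))) = k + s0 * (l - k)" for k l :: real
  proof -
    have "l - e * (l - (k + sm * (l - k))) = l - (e * (1 - sm)) * (l - k)" by (simp add: algebra_simps)
    also have "\<dots> = k + s0 * (l - k)" unfolding ee by (simp add: algebra_simps)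
    finally show ?thesis .
  qed
  have "b - e *\<^sub>R (b - lin a b sm) = lin a b s0"
    by (simp add: prod_eq_iff lin_def co)
  then show ?thesis using mem_interior_closure_convex_shrink[OF assms(1,4,3) e] by simp
next
  case False
  define e where "e = s0 / sm"
  have e: "0 < e" "e \<le> 1" using False assms(7,8) unfolding e_def by (auto simp: divide_le_eq)
  have "a - e *\<^sub>R (a - lin a b sm) = lin a b s0" using False assms(7) unfolding e_def
    by (simp add: prod_eq_iff lin_def field_simps)
  then show ?thesis using mem_interior_closure_convex_shrink[OF assms(1,4,2) e] by simp
qed

lemma vseg_int:
  fixes S :: "pt set"
  assumes "convex S" "(c, Y0) \<in> interior S" "(c, Y2) \<in> closure S" "(Y1 - Y0) * (Y1 - Y2) < 0"
  shows "(c, Y1) \<in> interior S"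
proof -
  define e where "e = (Y2 - Y1) / (Y2 - Y0)"
  have e: "0 < e" "e \<le> 1" using assms(4) unfolding e_def
    by (auto simp: mult_less_0_iff divide_le_eq zero_less_divide_iff)
  have ne: "Y2 \<noteq> Y0" using assms(4) by auto
  have "(c, Y2) - e *\<^sub>R ((c, Y2) - (c, Y0)) = (c, Y1)" using ne unfolding e_def
    by (simp add: field_simps)
  then show ?thesis using mem_interior_closure_convex_shrink[OF assms(1,2,3) e] by simp
qed

lemma sign_trans: "A * C \<le> 0 \<Longrightarrow> B * C > 0 \<Longrightarrow> A * B \<le> (0::real)"
  by (auto simp: mult_le_0_iff zero_less_mult_iff)

lemma ivt:
  fixes f :: "nat \<Rightarrow> real"
  shows "(f 0 - y) * (f (Suc n) - y) \<le> 0 \<Longrightarrow> \<exists>i\<le>n. (f i - y) * (f (Suc i) - y) \<le> 0"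
proof (induction n)
  case 0
  then show ?case by auto
next
  case (Suc n)
  show ?case
  proof (cases "(f (Suc n) - y) * (f (Suc (Suc n)) - y) \<le> 0")
    case True
    then show ?thesis by auto
  next
    case False
    then have "(f 0 - y) * (f (Suc n) - y) \<le> 0"
      using sign_trans[of "f 0 - y" "f (Suc (Suc n)) - y" "f (Suc n) - y"] Suc.prems
      by (simp add: mult.commute)
    then show ?thesis using Suc.IH le_SucI by blast
  qed
qed

lemma order_aux:
  fixes Yf Yg Y0 Y' :: real
  assumes "(Yf - Y0) * (Yg - Y0) < 0" "\<not> (Yf - Y0) * (Yf - Y') < 0" "\<not> (Yg - Y0) * (Yg - Y') < 0"
    "Yf \<noteq> Y'" "Yg \<noteq> Y'" "Y0 \<noteq> Y'"
  shows "(Y' - Yf) * (Y' - Yg) < 0"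
proof -
  have h1: "Yf < Y0 \<and> Y0 < Yg \<or> Yg < Y0 \<and> Y0 < Yf" using assms(1) by (auto simp: mult_less_0_iff)
  have h2: "\<not> (Y0 < Yf \<and> Yf < Y' \<or> Y' < Yf \<and> Yf < Y0)"
    using assms(2) by (auto simp: mult_less_0_iff)
  have h3: "\<not> (Y0 < Yg \<and> Yg < Y' \<or> Y' < Yg \<and> Yg < Y0)"
    using assms(3) by (auto simp: mult_less_0_iff)
  have "Yf < Y' \<and> Y' < Yg \<or> Yg < Y' \<and> Y' < Yf"
    using h1 h2 h3 assms(4,5,6) by (smt (verit))
  then show ?thesis by (auto simp: mult_less_0_iff)
qed

context setting
begin

lemma hullP_closed: "closure (convex hull P) = convex hull P"
  using finP by (simp add: closure_closed compact_imp_closed compact_convex_hull finite_imp_compact)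

lemma cross_in_hull:
  assumes "{a, b} \<in> edges_of T" "xing c a b"
  shows "(c, Ycr c {a, b}) \<in> convex hull P"
proof -
  have "{a, b} \<subseteq> P" using edge_P[OF tri assms(1)] by auto
  then have "convex hull {a, b} \<subseteq> convex hull P" by (rule hull_mono)
  then show ?thesis using Ycr_hull[OF assms(2)] by (rule subsetD)
qed

lemma he_not_int:
  assumes "hull_edge P {a, b}" "xing c a b"
  shows "(c, Ycr c {a, b}) \<notin> interior (convex hull P)"
proof -
  have "convex hull {a, b} \<subseteq> frontier (convex hull P)" using assms(1) unfolding hull_edge_def by (rule conjunct2)
  then have "(c, Ycr c {a, b}) \<in> frontier (convex hull P)" using Ycr_hull[OF assms(2)] by (rule subsetD)
  then show ?thesis by (simp add: frontier_def)
qed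

lemma z0_int:
  assumes "{a, b} \<in> edges_of T" "xing c a b" "\<not> hull_edge P {a, b}"
  shows "(c, Ycr c {a, b}) \<in> interior (convex hull P)"
proof -
  have P: "a \<in> P" "b \<in> P" using edge_P[OF tri assms(1)] by auto
  have ab: "a \<noteq> b" using assms(2) by auto
  have "\<not> convex hull {a, b} \<subseteq> frontier (convex hull P)" using assms(3) P ab
    unfolding hull_edge_def by blast
  then obtain m where m: "m \<in> convex hull {a, b}" "m \<notin> frontier (convex hull P)" by blast
  have "convex hull {a, b} \<subseteq> convex hull P" using P by (intro hull_mono) auto
  then have mint: "m \<in> interior (convex hull P)" using m hullP_closed unfolding frontier_def by auto
  have "m \<in> closed_segment a b" using m(1) by (simp add: segment_convex_hull)
  then obtain sm where sm: "0 \<le> sm" "sm \<le> 1" "m = lin a b sm"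
    using closed_segment_lin by blast
  have ac: "a \<in> closure (convex hull P)" "b \<in> closure (convex hull P)"
    using hullP_closed hull_inc[OF P(1)] hull_inc[OF P(2)] by simp_all
  have mi: "lin a b sm \<in> interior (convex hull P)" using mint sm(3) by simp
  have "lin a b (sc c a b) \<in> interior (convex hull P)"
    using seg_int[OF convex_convex_hull ac mi sm(1,2)] sc_bounds[OF assms(2)] by blast
  then show ?thesis using Ycr_eq[OF assms(2)] by simp
qed

end


lemma crosses_xing: "crosses c f \<Longrightarrow> \<exists>x y. f = {x, y} \<and> xing c x y"
proof -
  assume "crosses c f"
  then obtain x y where "f = {x, y}" "fst x < c" "c < fst y" unfolding crosses_def by blast
  moreover have "(fst x - c) * (fst y - c) < 0" using calculation by (intro mult_neg_pos) auto
  ultimately show ?thesis by blast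
qed

lemma xing_sym: "xing c a b \<Longrightarrow> xing c b a" by (simp add: mult.commute)

lemma region_eq:
  assumes "xing c v w" "xing c v w'" "{v, w} \<inter> {v, w'} = {v}"
  shows "region c {v, w} {v, w'} = convex hull {v, (c, Ycr c {v, w}), (c, Ycr c {v, w'})}"
proof -
  have "(convex hull {v, w} \<union> convex hull {v, w'}) \<inter> vline c
      = (convex hull {v, w} \<inter> vline c) \<union> (convex hull {v, w'} \<inter> vline c)" by blast
  also have "\<dots> = {(c, Ycr c {v, w}), (c, Ycr c {v, w'})}"
    using hull2_vline[OF assms(1)] hull2_vline[OF assms(2)] by auto
  finally show ?thesis unfolding region_def assms(3) by (simp add: insert_commute)
qed

lemma edge_of_tri: "t \<in> T \<Longrightarrow> x \<in> t \<Longrightarrow> y \<in> t \<Longrightarrow> x \<noteq> y \<Longrightarrow> {x, y} \<in> edges_of T"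
  unfolding edges_of_def by blast

lemma other_end:
  assumes "f = {x, y}" "xing c x y" "v \<in> f"
  shows "\<exists>w. f = {v, w} \<and> xing c v w"
proof (cases "v = x")
  case True then show ?thesis using assms by (intro exI[of _ y]) auto
next
  case False then have "v = y" using assms by auto
  then show ?thesis using assms xing_sym[OF assms(2)] by (intro exI[of _ x]) (auto simp: insert_commute)
qed

context setting
begin

lemma bracket:
  assumes h1: "hull_edge P {x1, y1}" "{x1, y1} \<in> edges_of T" "xing c x1 y1"
    and h2: "hull_edge P {x2, y2}" "{x2, y2} \<in> edges_of T" "xing c x2 y2"
    and ne: "{x1, y1} \<noteq> {x2, y2}"
    and z0: "(c, Y0) \<in> interior (convex hull P)"
  shows "(Ycr c {x1, y1} - Y0) * (Ycr c {x2, y2} - Y0) \<le> 0"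
proof (rule ccontr)
  assume pos: "\<not> ?thesis"
  define Y1 where "Y1 = Ycr c {x1, y1}"
  define Y2 where "Y2 = Ycr c {x2, y2}"
  have "Y1 \<noteq> Y2" using same_cross[OF h1(2) h2(2) h1(3) h2(3)] ne unfolding Y1_def Y2_def by blast
  then have "(Y1 - Y0) * (Y1 - Y2) < 0 \<or> (Y2 - Y0) * (Y2 - Y1) < 0"
    using pos unfolding Y1_def[symmetric] Y2_def[symmetric]
    by (auto simp: mult_less_0_iff not_le zero_less_mult_iff)
  then show False
  proof
    assume "(Y1 - Y0) * (Y1 - Y2) < 0"
    moreover have "(c, Y2) \<in> closure (convex hull P)" using cross_in_hull[OF h2(2,3)] hullP_closed
      unfolding Y2_def by simp
    ultimately have "(c, Y1) \<in> interior (convex hull P)" using vseg_int[OF convex_convex_hull z0] by blast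
    then show False using he_not_int[OF h1(1,3)] unfolding Y1_def by simp
  next
    assume "(Y2 - Y0) * (Y2 - Y1) < 0"
    moreover have "(c, Y1) \<in> closure (convex hull P)" using cross_in_hull[OF h1(2,3)] hullP_closed
      unfolding Y1_def by simp
    ultimately have "(c, Y2) \<in> interior (convex hull P)" using vseg_int[OF convex_convex_hull z0] by blast
    then show False using he_not_int[OF h2(1,3)] unfolding Y2_def by simp
  qed
qed

end


lemma side_pick: "xing c a b \<Longrightarrow> fst v \<noteq> c \<Longrightarrow> (fst a - c) * (fst v - c) > 0 \<or> (fst b - c) * (fst v - c) > 0"
  by (auto simp: mult_less_0_iff zero_less_mult_iff)

lemma pick2: "fst p \<noteq> c \<Longrightarrow> fst q \<noteq> c \<Longrightarrow> fst v \<noteq> (c::real) \<Longrightarrow> (fst p < c) \<noteq> (fst q < c) \<Longrightarrow>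
   (fst p - c) * (fst v - c) > 0 \<or> (fst q - c) * (fst v - c) > 0"
  by (auto simp: zero_less_mult_iff)

lemma sign3: "(x::real) * y > 0 \<Longrightarrow> y * z < 0 \<Longrightarrow> x * z < 0"
  by (auto simp: mult_less_0_iff zero_less_mult_iff)

context setting
begin

lemma path_edge:
  assumes "is_T_path P T c \<pi>" "f \<in> set \<pi>"
  shows "f \<in> edges_of T" "\<exists>x y. f = {x, y} \<and> xing c x y"
  using assms crosses_xing unfolding is_T_path_def by blast+

lemma contains:
  assumes good: "good_edge P T c e" and pth: "is_T_path P T c \<pi>"
  shows "e \<in> set \<pi>"
proof (rule ccontr)
  assume nin: "e \<notin> set \<pi>"
  obtain a b where e: "e = {a, b}" "xing c a b" using good crosses_xing unfolding good_edge_def by blast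
  have eT: "e \<in> edges_of T" and nhe: "\<not> hull_edge P e"
    and opp: "\<exists>p q. opposite_vertices T e p q"
    and sides: "\<forall>p q. opposite_vertices T e p q \<longrightarrow> (fst p < c) \<noteq> (fst q < c)"
    using good unfolding good_edge_def flippable_def by blast+
  define Y0 where "Y0 = Ycr c e"
  have z0: "(c, Y0) \<in> interior (convex hull P)" using z0_int[OF eT[unfolded e] e(2)] nhe e
    unfolding Y0_def by simp
  have pne: "\<pi> \<noteq> []" and hd1: "hull_edge P (hd \<pi>)" and la1: "hull_edge P (last \<pi>)"
    and hdl: "hd \<pi> \<noteq> last \<pi>"
    and cons: "\<forall>i. Suc i < length \<pi> \<longrightarrow> card (\<pi> ! i \<inter> \<pi> ! Suc i) = 1 \<and>
        region c (\<pi> ! i) (\<pi> ! Suc i) \<inter> P \<subseteq> \<pi> ! i \<inter> \<pi> ! Suc i"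
    using pth unfolding is_T_path_def by blast+
  define n where "n = length \<pi>"
  have n2: "n \<ge> 2"
  proof (rule ccontr)
    assume "\<not> n \<ge> 2"
    moreover have "n > 0" using pne unfolding n_def by simp
    ultimately have "length \<pi> = 1" unfolding n_def by linarith
    then obtain x where "\<pi> = [x]" by (metis One_nat_def length_0_conv length_Suc_conv)
    then have "hd \<pi> = last \<pi>" by simp
    then show False using hdl by simp
  qed
  define Y where "Y = (\<lambda>j. Ycr c (\<pi> ! j))"
  have mem: "\<And>j. j < n \<Longrightarrow> \<pi> ! j \<in> set \<pi>" unfolding n_def by simp
  have hd0: "hd \<pi> = \<pi> ! 0" using pne by (simp add: hd_conv_nth)
  have last0: "last \<pi> = \<pi> ! (n - 1)" using pne unfolding n_def by (simp add: last_conv_nth)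
  obtain x1 y1 where h1: "\<pi> ! 0 = {x1, y1}" "xing c x1 y1" using path_edge(2)[OF pth mem[of 0]] n2 by auto
  obtain x2 y2 where h2: "\<pi> ! (n - 1) = {x2, y2}" "xing c x2 y2" using path_edge(2)[OF pth mem[of "n - 1"]] n2 by auto
  have "(Y 0 - Y0) * (Y (n - 1) - Y0) \<le> 0"
    using bracket[of x1 y1 x2 y2 Y0] hd1 la1 hdl h1 h2 hd0 last0 z0 path_edge(1)[OF pth mem[of 0]]
      path_edge(1)[OF pth mem[of "n - 1"]] n2 unfolding Y_def by auto
  moreover have "n - 1 = Suc (n - 2)" using n2 by simp
  ultimately obtain i where i: "i \<le> n - 2" "(Y i - Y0) * (Y (Suc i) - Y0) \<le> 0"
    using ivt[of Y Y0 "n - 2"] by auto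
  have si: "Suc i < n" using i n2 by simp
  have fi: "\<pi> ! i \<in> set \<pi>" "\<pi> ! Suc i \<in> set \<pi>" using si mem by auto
  obtain xf yf where f0: "\<pi> ! i = {xf, yf}" "xing c xf yf" using path_edge(2)[OF pth fi(1)] by blast
  obtain xg yg where g0: "\<pi> ! Suc i = {xg, yg}" "xing c xg yg" using path_edge(2)[OF pth fi(2)] by blast
  have fT: "\<pi> ! i \<in> edges_of T" "\<pi> ! Suc i \<in> edges_of T" using path_edge(1)[OF pth] fi by auto
  show False
  proof (cases "(Y i - Y0) * (Y (Suc i) - Y0) = 0")
    case True
    then have "Y i = Y0 \<or> Y (Suc i) = Y0" by simp
    then have "\<pi> ! i = e \<or> \<pi> ! Suc i = e"
      using same_cross[of xf yf a b] same_cross[of xg yg a b] f0 g0 fT e eT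
      unfolding Y_def Y0_def by auto
    then show False using nin fi by auto
  next
    case False
    then have btw: "(Y i - Y0) * (Y (Suc i) - Y0) < 0" using i(2) by linarith
    have c1: "card (\<pi> ! i \<inter> \<pi> ! Suc i) = 1" and rg: "region c (\<pi> ! i) (\<pi> ! Suc i) \<inter> P \<subseteq> \<pi> ! i \<inter> \<pi> ! Suc i"
      using cons si unfolding n_def by auto
    obtain v where v: "\<pi> ! i \<inter> \<pi> ! Suc i = {v}" using c1 card_1_singletonE by blast
    obtain w where w: "\<pi> ! i = {v, w}" "xing c v w" using other_end[OF f0] v by blast
    obtain w' where w': "\<pi> ! Suc i = {v, w'}" "xing c v w'" using other_end[OF g0] v by blast
    have reg: "convex hull {v, (c, Ycr c {v, w}), (c, Ycr c {v, w'})} \<inter> P \<subseteq> {v}"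
      using rg region_eq[OF w(2) w'(2)] v w(1) w'(1) by auto
    have fv: "{v, w} \<in> edges_of T" "{v, w'} \<in> edges_of T" using fT w w' by auto
    have Yi: "Y i = Ycr c {v, w}" "Y (Suc i) = Ycr c {v, w'}" unfolding Y_def using w w' by auto
    have vc: "fst v \<noteq> c" using w(2) by auto
    obtain a' b' where ab': "e = {a', b'}" "xing c a' b'" "(fst a' - c) * (fst v - c) > 0"
      using side_pick[OF e(2) vc] e xing_sym[OF e(2)] by (metis insert_commute)
    have "(Ycr c {a', b'} - Ycr c {v, w}) * (Ycr c {a', b'} - Ycr c {v, w'}) < 0"
      using btw ab'(1) Yi unfolding Y0_def by (simp add: mult.commute algebra_simps)
    then have a'v: "a' = v" using fan[OF fv(1) w(2) fv(2) w'(2) reg, of a' b'] eT ab' by simp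
    define u where "u = b'"
    have eu: "e = {v, u}" "xing c v u" using ab' a'v unfolding u_def by auto
    obtain p q where pq: "opposite_vertices T e p q" using opp by blast
    have pqs: "(fst p < c) \<noteq> (fst q < c)" using sides pq by blast
    have pqT: "insert p e \<in> T" "insert q e \<in> T" "p \<notin> e" "q \<notin> e"
      using pq unfolding opposite_vertices_def by auto
    have pP: "p \<in> P" "q \<in> P" using tri_facts(1)[OF tri pqT(1)] tri_facts(1)[OF tri pqT(2)] by auto
    obtain ov where o: "insert ov e \<in> T" "ov \<notin> e" "(fst ov - c) * (fst v - c) > 0"
      using pick2[OF offline[OF pP(1)] offline[OF pP(2)] vc pqs] pqT by blast
    have ou: "xing c ov u" using sign3[OF o(3) eu(2)] .
    have tT: "{u, v, ov} \<in> T" using o(1) eu(1) by (simp add: insert_commute)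
    have ouT: "{ov, u} \<in> edges_of T" using edge_of_tri[OF tT, of ov u] o(2) eu(1) by auto
    have vu: "v \<noteq> u" using eu(2) by auto
    have "orient u v ov \<noteq> 0"
      using orient_tri[OF refl tri_facts(3)[OF tri tT]] vu by auto
    then have ch: "chord c u v ov" using xing_sym[OF eu(2)] xing_sym[OF ou] by unfold_locales auto
    define Y' where "Y' = Ycr c {ov, u}"
    have Y0e: "Ycr c {u, v} = Y0" unfolding Y0_def eu(1) by (simp add: insert_commute)
    have Y'e: "Ycr c {u, ov} = Y'" unfolding Y'_def by (simp add: insert_commute)
    have nf: "\<not> (Y i - Y0) * (Y i - Y') < 0"
      using open_chord[OF tT refl ch _ fv(1) w(2)] Y0e Y'e Yi by auto
    have ng: "\<not> (Y (Suc i) - Y0) * (Y (Suc i) - Y') < 0"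
      using open_chord[OF tT refl ch _ fv(2) w'(2)] Y0e Y'e Yi by auto
    have vnot: "v \<notin> {ov, u}" using o(2) eu(1) vu by auto
    have "Y i \<noteq> Y'" using same_cross[OF fv(1) ouT w(2) ou] vnot Yi unfolding Y'_def by auto
    moreover have "Y (Suc i) \<noteq> Y'" using same_cross[OF fv(2) ouT w'(2) ou] vnot Yi unfolding Y'_def by auto
    moreover have "Y0 \<noteq> Y'" using same_cross[OF eT[unfolded eu(1)] ouT eu(2) ou] vnot
      unfolding Y'_def Y0_def eu(1) by auto
    ultimately have "(Y' - Y i) * (Y' - Y (Suc i)) < 0" using order_aux btw nf ng by blast
    then have "ov = v" using fan[OF fv(1) w(2) fv(2) w'(2) reg ouT ou o(3)] Yi unfolding Y'_def by simp
    then show False using o(2) eu(1) by simp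
  qed
qed

end


lemma consec_arith:
  fixes Y1 Y2 Yw Yd y :: real
  assumes "Y1 < y" "y < Y2" "(y - Yw) * (y - Yd) < 0"
    "\<not> (Y1 < Yw \<and> Yw < Y2)" "\<not> (Y1 < Yd \<and> Yd < Y2)"
    "\<not> (Y1 - Yw) * (Y1 - Yd) < 0" "\<not> (Y2 - Yw) * (Y2 - Yd) < 0"
  shows "(Yw = Y1 \<and> Yd = Y2) \<or> (Yw = Y2 \<and> Yd = Y1)"
proof -
  have h: "Yw < y \<and> y < Yd \<or> Yd < y \<and> y < Yw" using assms(3) by (auto simp: mult_less_0_iff)
  have h6: "\<not> (Yw < Y1 \<and> Y1 < Yd \<or> Yd < Y1 \<and> Y1 < Yw)" using assms(6) by (auto simp: mult_less_0_iff)
  have h7: "\<not> (Yw < Y2 \<and> Y2 < Yd \<or> Yd < Y2 \<and> Y2 < Yw)" using assms(7) by (auto simp: mult_less_0_iff)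
  show ?thesis using h h6 h7 assms(1,2,4,5) by (smt (verit))
qed

lemma xing_crosses:
  assumes "xing c a b" shows "crosses c {a, b}"
proof (cases "fst a < c")
  case True
  then have "c < fst b" using assms by (auto simp: mult_less_0_iff)
  then show ?thesis using True unfolding crosses_def by blast
next
  case False
  then have "fst b < c" "c < fst a" using assms by (auto simp: mult_less_0_iff)
  moreover have "{a, b} = {b, a}" by auto
  ultimately show ?thesis unfolding crosses_def by blast
qed

context setting
begin

definition "Ec = {f \<in> edges_of T. crosses c f}"

lemma Ec_xing: "f \<in> Ec \<Longrightarrow> \<exists>x y. f = {x, y} \<and> xing c x y"
  unfolding Ec_def using crosses_xing by blast

lemma Ec_edge: "f \<in> Ec \<Longrightarrow> f \<in> edges_of T" unfolding Ec_def by blast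

lemma Ec_finite: "finite Ec"
proof -
  have "Ec \<subseteq> Pow P"
  proof
    fix f assume "f \<in> Ec"
    then obtain x y where xy: "f = {x, y}" "xing c x y" using Ec_xing by blast
    then have "{x, y} \<in> edges_of T" using Ec_edge \<open>f \<in> Ec\<close> by simp
    then show "f \<in> Pow P" using edge_P[OF tri] xy by auto
  qed
  then show ?thesis using finP by (meson finite_Pow_iff finite_subset)
qed

lemma Ec_inj: "f \<in> Ec \<Longrightarrow> g \<in> Ec \<Longrightarrow> Ycr c f = Ycr c g \<Longrightarrow> f = g"
proof -
  assume fg: "f \<in> Ec" "g \<in> Ec" "Ycr c f = Ycr c g"
  obtain x y where f: "f = {x, y}" "xing c x y" using Ec_xing fg(1) by blast
  obtain x' y' where g: "g = {x', y'}" "xing c x' y'" using Ec_xing fg(2) by blast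
  show "f = g" using same_cross[of x y x' y'] f g fg Ec_edge by auto
qed

lemma chord_Ec:
  assumes "t \<in> T" "t = {u, w, d}" "chord c u w d"
  shows "{u, w} \<in> Ec" "{u, d} \<in> Ec"
proof -
  have x: "xing c u w" "xing c u d" using assms(3) unfolding chord_def by auto
  then have "u \<noteq> w" "u \<noteq> d" by auto
  then show "{u, w} \<in> Ec" "{u, d} \<in> Ec" unfolding Ec_def
    using edge_of_tri[OF assms(1)] assms(2) xing_crosses[OF x(1)] xing_crosses[OF x(2)] by auto
qed

lemma cover: "z \<in> convex hull P \<Longrightarrow> \<exists>t\<in>T. z \<in> convex hull t"
  using tri unfolding triangulation_def by blast

lemma seg_cross_int:
  assumes "{a, b} \<in> edges_of T" "xing c a b" "m \<in> convex hull {a, b}" "m \<in> interior (convex hull P)"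
  shows "(c, Ycr c {a, b}) \<in> interior (convex hull P)"
proof -
  have P: "a \<in> P" "b \<in> P" using edge_P[OF tri assms(1)] by auto
  have "m \<in> closed_segment a b" using assms(3) by (simp add: segment_convex_hull)
  then obtain sm where sm: "0 \<le> sm" "sm \<le> 1" "m = lin a b sm"
    using closed_segment_lin by blast
  have ac: "a \<in> closure (convex hull P)" "b \<in> closure (convex hull P)"
    using hullP_closed hull_inc[OF P(1)] hull_inc[OF P(2)] by simp_all
  have mi: "lin a b sm \<in> interior (convex hull P)" using assms(4) sm(3) by simp
  have "lin a b (sc c a b) \<in> interior (convex hull P)"
    using seg_int[OF convex_convex_hull ac mi sm(1,2)] sc_bounds[OF assms(2)] by blast
  then show ?thesis using Ycr_eq[OF assms(2)] by simp
qed

lemma extreme_hull_edge: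
  assumes f: "f \<in> Ec" and sg: "\<sigma> = 1 \<or> \<sigma> = -1" and ext: "\<forall>g\<in>Ec. \<sigma> * Ycr c f \<le> \<sigma> * Ycr c g"
  shows "hull_edge P f"
proof -
  obtain x y where xy: "f = {x, y}" "xing c x y" using Ec_xing f by blast
  have "{x, y} \<in> edges_of T" using Ec_edge f xy by simp
  then have P: "x \<in> P" "y \<in> P" using edge_P[OF tri] by auto
  have ss: "\<sigma> * \<sigma> = 1" using sg by auto
  have sub: "convex hull f \<subseteq> convex hull P" using P xy by (intro hull_mono) auto
  have "convex hull f \<inter> interior (convex hull P) = {}"
  proof (rule ccontr)
    assume "convex hull f \<inter> interior (convex hull P) \<noteq> {}"
    then obtain m where m: "m \<in> convex hull {x, y}" "m \<in> interior (convex hull P)" using xy by auto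
    define Yf where "Yf = Ycr c f"
    have "(c, Yf) \<in> interior (convex hull P)"
      using seg_cross_int[OF _ xy(2) m] Ec_edge f xy unfolding Yf_def by auto
    then obtain \<epsilon> where eps: "\<epsilon> > 0" "ball (c, Yf) \<epsilon> \<subseteq> convex hull P"
      using mem_interior by blast
    define y where "y = Yf - \<sigma> * (\<epsilon> / 2)"
    have "dist (c, Yf) (c, y) = \<epsilon> / 2" unfolding y_def using sg eps(1)
      by (auto simp: dist_Pair_Pair dist_real_def)
    then have "(c, y) \<in> convex hull P" using eps by auto
    then obtain t where t: "t \<in> T" "(c, y) \<in> convex hull t" using cover by blast
    obtain u w d where uwd: "t = {u, w, d}" "chord c u w d"
      "(y - Ycr c {u, w}) * (y - Ycr c {u, d}) \<le> 0"
      using chord_closed[OF t] by blast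
    have "\<sigma> * Yf \<le> \<sigma> * Ycr c {u, w}" "\<sigma> * Yf \<le> \<sigma> * Ycr c {u, d}"
      using ext chord_Ec[OF t(1) uwd(1,2)] unfolding Yf_def by auto
    moreover have "\<sigma> * y = \<sigma> * Yf - \<epsilon> / 2" unfolding y_def using ss by (simp add: algebra_simps)
    ultimately have n1: "\<sigma> * (y - Ycr c {u, w}) < 0" "\<sigma> * (y - Ycr c {u, d}) < 0"
      using eps(1) by (simp_all add: algebra_simps)
    have "(\<sigma> * (y - Ycr c {u, w})) * (\<sigma> * (y - Ycr c {u, d})) = (\<sigma> * \<sigma>) * ((y - Ycr c {u, w}) * (y - Ycr c {u, d}))"
      by algebra
    then have "(y - Ycr c {u, w}) * (y - Ycr c {u, d}) = (\<sigma> * (y - Ycr c {u, w})) * (\<sigma> * (y - Ycr c {u, d}))"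
      unfolding ss by simp
    also have "\<dots> > 0" using n1 by (simp add: mult_neg_neg)
    finally show False using uwd(3) by simp
  qed
  then have "convex hull f \<subseteq> frontier (convex hull P)"
    using sub hullP_closed unfolding frontier_def by auto
  moreover have "x \<noteq> y" using xy(2) by auto
  ultimately show ?thesis unfolding hull_edge_def using xy(1) P by blast
qed

lemma reg_sub:
  assumes "t \<in> T" "t = {u, w, d}" "chord c u w d"
  shows "convex hull {u, (c, Ycr c {u, w}), (c, Ycr c {u, d})} \<inter> P \<subseteq> {u}"
proof
  fix z assume z: "z \<in> convex hull {u, (c, Ycr c {u, w}), (c, Ycr c {u, d})} \<inter> P"
  have x: "xing c u w" "xing c u d" using assms(3) unfolding chord_def by auto
  have "(c, Ycr c {u, w}) \<in> convex hull t" "(c, Ycr c {u, d}) \<in> convex hull t" "u \<in> convex hull t"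
    using Ycr_hull[OF x(1)] Ycr_hull[OF x(2)] hull_mono[of "{u, w}" t] hull_mono[of "{u, d}" t]
      hull_inc[of u t] assms(2) by auto
  then have "convex hull {u, (c, Ycr c {u, w}), (c, Ycr c {u, d})} \<subseteq> convex hull t"
    by (intro hull_minimal) (auto simp: convex_convex_hull)
  then have "z \<in> t" using z tri_facts(4)[OF tri assms(1)] by auto
  moreover have "(fst u - c) * (fst z - c) \<ge> 0"
    using hull_side_ge[of "{u, (c, Ycr c {u, w}), (c, Ycr c {u, d})}" "fst u - c" c z] z by auto
  moreover have "(fst u - c) * (fst w - c) < 0" "(fst u - c) * (fst d - c) < 0" using x by auto
  ultimately show "z \<in> {u}" using assms(2) by auto
qed

lemma consec:
  assumes f1: "f1 \<in> Ec" and f2: "f2 \<in> Ec" and lt: "Ycr c f1 < Ycr c f2"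
    and gap: "\<forall>h\<in>Ec. \<not> (Ycr c f1 < Ycr c h \<and> Ycr c h < Ycr c f2)"
  shows "card (f1 \<inter> f2) = 1 \<and> region c f1 f2 \<inter> P \<subseteq> f1 \<inter> f2"
proof -
  obtain x1 y1 where e1: "f1 = {x1, y1}" "xing c x1 y1" using Ec_xing f1 by blast
  obtain x2 y2 where e2: "f2 = {x2, y2}" "xing c x2 y2" using Ec_xing f2 by blast
  define Y1 where "Y1 = Ycr c f1"
  define Y2 where "Y2 = Ycr c f2"
  define y where "y = (Y1 + Y2) / 2"
  have p1: "(c, Y1) \<in> convex hull P" using cross_in_hull[of x1 y1] e1 Ec_edge f1 unfolding Y1_def by auto
  have p2: "(c, Y2) \<in> convex hull P" using cross_in_hull[of x2 y2] e2 Ec_edge f2 unfolding Y2_def by auto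
  have "(1/2) *\<^sub>R (c, Y1) + (1/2) *\<^sub>R (c, Y2) \<in> convex hull P"
    using convexD[OF convex_convex_hull p1 p2, of "1/2" "1/2"] by simp
  moreover have "(1/2) *\<^sub>R (c, Y1) + (1/2) *\<^sub>R (c, Y2) = (c, y)" unfolding y_def by (simp add: field_simps)
  ultimately have "(c, y) \<in> convex hull P" by simp
  then obtain t where t: "t \<in> T" "(c, y) \<in> convex hull t" using cover by blast
  obtain u w d where uwd: "t = {u, w, d}" "chord c u w d"
    "(y - Ycr c {u, w}) * (y - Ycr c {u, d}) \<le> 0"
    using chord_closed[OF t] by blast
  have x: "xing c u w" "xing c u d" using uwd(2) unfolding chord_def by auto
  have Ec2: "{u, w} \<in> Ec" "{u, d} \<in> Ec" using chord_Ec[OF t(1) uwd(1,2)] by auto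
  define Yw where "Yw = Ycr c {u, w}"
  define Yd where "Yd = Ycr c {u, d}"
  have ne: "Yw \<noteq> Yd" using chord.Yne[OF uwd(2)] unfolding chord.Yw_def[OF uwd(2)] chord.Yd_def[OF uwd(2)] Yw_def Yd_def .
  have yb: "Y1 < y" "y < Y2" using lt unfolding y_def Y1_def Y2_def by auto
  have nw: "\<not> (Y1 < Yw \<and> Yw < Y2)" "\<not> (Y1 < Yd \<and> Yd < Y2)" using gap Ec2 unfolding Y1_def Y2_def Yw_def Yd_def by auto
  have "y \<noteq> Yw" "y \<noteq> Yd" using nw yb by auto
  then have prod: "(y - Yw) * (y - Yd) < 0" using uwd(3) unfolding Yw_def Yd_def by (simp add: less_le)
  have o1: "\<not> (Y1 - Yw) * (Y1 - Yd) < 0"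
    using open_chord[OF t(1) uwd(1,2), of x1 y1] e1 Ec_edge f1 unfolding Y1_def Yw_def Yd_def by auto
  have o2: "\<not> (Y2 - Yw) * (Y2 - Yd) < 0"
    using open_chord[OF t(1) uwd(1,2), of x2 y2] e2 Ec_edge f2 unfolding Y2_def Yw_def Yd_def by auto
  have cases: "(Yw = Y1 \<and> Yd = Y2) \<or> (Yw = Y2 \<and> Yd = Y1)" using consec_arith[OF yb prod nw o1 o2] .
  have wd: "w \<noteq> d" using ne unfolding Yw_def Yd_def by auto
  have uw: "u \<noteq> w" "u \<noteq> d" using x by auto
  have int: "{u, w} \<inter> {u, d} = {u}" "{u, d} \<inter> {u, w} = {u}" using wd uw by auto
  have rs: "convex hull {u, (c, Yw), (c, Yd)} \<inter> P \<subseteq> {u}" using reg_sub[OF t(1) uwd(1,2)]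
    unfolding Yw_def Yd_def .
  from cases show ?thesis
  proof
    assume "Yw = Y1 \<and> Yd = Y2"
    then have fe: "f1 = {u, w}" "f2 = {u, d}" using Ec_inj Ec2 f1 f2 unfolding Y1_def Y2_def Yw_def Yd_def by auto
    show ?thesis unfolding fe int(1) region_eq[OF x int(1)] using rs unfolding Yw_def Yd_def by simp
  next
    assume "Yw = Y2 \<and> Yd = Y1"
    then have fe: "f1 = {u, d}" "f2 = {u, w}" using Ec_inj Ec2 f1 f2 unfolding Y1_def Y2_def Yw_def Yd_def by auto
    have hc: "convex hull {u, (c, Yd), (c, Yw)} = convex hull {u, (c, Yw), (c, Yd)}"
      by (simp add: insert_commute)
    show ?thesis unfolding fe int(2) region_eq[OF x(2) x(1) int(2)] using rs hc unfolding Yw_def Yd_def by simp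
  qed
qed

end


context setting
begin

lemma existence:
  assumes eEc: "e \<in> Ec" and nhe: "\<not> hull_edge P e"
  shows "\<exists>\<pi>. is_T_path P T c \<pi>"
proof -
  define S where "S = Ycr c ` Ec"
  have finS: "finite S" unfolding S_def using Ec_finite by simp
  define ys where "ys = sorted_list_of_set S"
  have setys: "set ys = S" unfolding ys_def using finS by simp
  have sw: "sorted_wrt (<) ys" unfolding ys_def by (rule strict_sorted_list_of_set)
  have dys: "distinct ys" unfolding ys_def by simp
  define g where "g = (\<lambda>y. THE f. f \<in> Ec \<and> Ycr c f = y)"
  have gprop: "g y \<in> Ec \<and> Ycr c (g y) = y" if yS: "y \<in> S" for y
  proof -
    obtain f where f: "f \<in> Ec" "y = Ycr c f" using yS unfolding S_def by blast
    have "g y = f" unfolding g_def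
      by (rule the_equality) (use f Ec_inj in auto)
    then show ?thesis using f by simp
  qed
  define \<pi> where "\<pi> = map g ys"
  define n where "n = length ys"
  have len: "length \<pi> = n" unfolding \<pi>_def n_def by simp
  have ysS: "ys ! k \<in> S" if "k < n" for k using that setys unfolding n_def by auto
  have pk: "\<pi> ! k = g (ys ! k)" if "k < n" for k using that unfolding \<pi>_def n_def by simp
  have pEc: "\<pi> ! k \<in> Ec" if "k < n" for k using pk[OF that] gprop[OF ysS[OF that]] by simp
  have pY: "Ycr c (\<pi> ! k) = ys ! k" if "k < n" for k using pk[OF that] gprop[OF ysS[OF that]] by simp
  have mono: "ys ! i < ys ! j" if "i < j" "j < n" for i j
    using sorted_wrt_nth_less[OF sw that(1)] that(2) unfolding n_def by simp
  have mono': "ys ! i \<le> ys ! j" if "i \<le> j" "j < n" for i j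
    using mono[of i j] that by (cases "i = j") auto
  have idx: "\<exists>j<n. ys ! j = y" if "y \<in> S" for y
    using that setys unfolding n_def by (auto simp: in_set_conv_nth)
  have eS: "Ycr c e \<in> S" unfolding S_def using eEc by simp
  have n0: "n > 0" using eS setys unfolding n_def by (cases ys) auto
  have he0: "hull_edge P (\<pi> ! 0)"
  proof (rule extreme_hull_edge[OF pEc[OF n0], of 1])
    show "\<forall>h\<in>Ec. 1 * Ycr c (\<pi> ! 0) \<le> 1 * Ycr c h"
    proof
      fix h assume "h \<in> Ec"
      then obtain j where "j < n" "ys ! j = Ycr c h" using idx unfolding S_def by blast
      then show "1 * Ycr c (\<pi> ! 0) \<le> 1 * Ycr c h" using mono'[of 0 j] pY[OF n0] by simp
    qed
  qed simp
  have n1: "n - 1 < n" using n0 by simp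
  have heL: "hull_edge P (\<pi> ! (n - 1))"
  proof (rule extreme_hull_edge[OF pEc[OF n1], of "-1"])
    show "\<forall>h\<in>Ec. -1 * Ycr c (\<pi> ! (n - 1)) \<le> -1 * Ycr c h"
    proof
      fix h assume "h \<in> Ec"
      then obtain j where "j < n" "ys ! j = Ycr c h" using idx unfolding S_def by blast
      then show "-1 * Ycr c (\<pi> ! (n - 1)) \<le> -1 * Ycr c h" using mono'[of j "n - 1"] pY[OF n1] by simp
    qed
  qed simp
  have "\<pi> ! 0 \<noteq> e" using he0 nhe by auto
  then have "ys ! 0 \<noteq> Ycr c e" using pY[OF n0] Ec_inj[OF pEc[OF n0] eEc] by auto
  moreover obtain j where j: "j < n" "ys ! j = Ycr c e" using idx eS by blast
  ultimately have "j \<noteq> 0" by metis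
  then have n2: "n \<ge> 2" using j by simp
  have pne: "\<pi> \<noteq> []" using n0 len by auto
  have hd: "hd \<pi> = \<pi> ! 0" using pne by (simp add: hd_conv_nth)
  have la: "last \<pi> = \<pi> ! (n - 1)" using pne len by (simp add: last_conv_nth)
  have hdla: "hd \<pi> \<noteq> last \<pi>"
  proof
    assume "hd \<pi> = last \<pi>"
    then have "ys ! 0 = ys ! (n - 1)" using hd la pY[OF n0] pY[OF n1] by metis
    moreover have "ys ! 0 < ys ! (n - 1)" using mono[of 0 "n - 1"] n2 by simp
    ultimately show False by simp
  qed
  have dist: "distinct \<pi>"
  proof -
    have "inj_on g (set ys)"
    proof (rule inj_onI)
      fix y1 y2 assume "y1 \<in> set ys" "y2 \<in> set ys" "g y1 = g y2"
      then show "y1 = y2" using gprop setys by metis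
    qed
    then show ?thesis unfolding \<pi>_def using dys by (simp add: distinct_map)
  qed
  have edges: "\<forall>f\<in>set \<pi>. f \<in> edges_of T \<and> crosses c f"
  proof
    fix f assume "f \<in> set \<pi>"
    then obtain y where "y \<in> S" "f = g y" unfolding \<pi>_def using setys by auto
    then have "f \<in> Ec" using gprop by simp
    then show "f \<in> edges_of T \<and> crosses c f" unfolding Ec_def by simp
  qed
  have cons: "\<forall>i. Suc i < length \<pi> \<longrightarrow> card (\<pi> ! i \<inter> \<pi> ! Suc i) = 1 \<and>
        region c (\<pi> ! i) (\<pi> ! Suc i) \<inter> P \<subseteq> \<pi> ! i \<inter> \<pi> ! Suc i"
  proof (intro allI impI)
    fix k assume "Suc k < length \<pi>"
    then have k: "Suc k < n" "k < n" using len by auto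
    have lt: "Ycr c (\<pi> ! k) < Ycr c (\<pi> ! Suc k)" using mono[of k "Suc k"] k pY by simp
    have gap: "\<forall>h\<in>Ec. \<not> (Ycr c (\<pi> ! k) < Ycr c h \<and> Ycr c h < Ycr c (\<pi> ! Suc k))"
    proof (intro ballI notI)
      fix h assume h: "h \<in> Ec" "Ycr c (\<pi> ! k) < Ycr c h \<and> Ycr c h < Ycr c (\<pi> ! Suc k)"
      then obtain j where j: "j < n" "ys ! j = Ycr c h" using idx unfolding S_def by blast
      show False
      proof (cases "j \<le> k")
        case True
        then show False using mono'[of j k] j h(2) pY k by simp
      next
        case False
        then have "Suc k \<le> j" by simp
        then show False using mono'[of "Suc k" j] j h(2) pY k by simp
      qed
    qed
    show "card (\<pi> ! k \<inter> \<pi> ! Suc k) = 1 \<and> region c (\<pi> ! k) (\<pi> ! Suc k) \<inter> P \<subseteq> \<pi> ! k \<inter> \<pi> ! Suc k"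
      using consec[OF pEc[OF k(2)] pEc[OF k(1)] lt gap] .
  qed
  have "is_T_path P T c \<pi>"
    unfolding is_T_path_def using pne dist edges he0 heL hd la hdla cons by simp
  then show ?thesis by blast
qed

end

theorem lemma1:
  fixes P :: "pt set" and T :: "pt set set" and c :: real and e :: "pt set"
  assumes "finite P" and "general_position P"
    and "triangulation P T"
    and "separating_vline P c"
    and "good_edge P T c e"
  shows "(\<exists>\<pi>. is_T_path P T c \<pi>) \<and> (\<forall>\<pi>. is_T_path P T c \<pi> \<longrightarrow> e \<in> set \<pi>)"
proof -
  interpret setting P T c using assms(1-4) by unfold_locales
  have "e \<in> Ec" "\<not> hull_edge P e" using assms(5) unfolding good_edge_def flippable_def Ec_def by auto
  then show ?thesis using existence contains[OF assms(5)] by blast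
qed


end
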